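(* Let $X,Y\in\mathcal L^2$ and $r=\mathrm{Corr}(X,Y)$. Assume one of the following: (i) $r=0$; (ii) $X$ and $Y$ have identical distributions; (iii) $X$ and $Y$ have different distributions and $|\mathrm{Supp}(Y)|>2$. Then $(X,Y)\in\mathrm{IC}_r$ if and only if $(X,Y)\in\mathrm{IC}^{\uparrow}_r$. Moreover, if (iii) holds and $(X,Y)\in\mathrm{IC}^{\uparrow}_r$, then $r=0$.
   Context: All random variables live on an atomless probability space. $\mathcal L^2$ denotes the set of non-degenerate real random variables with finite variance. A function $g:\mathbb R\to\mathbb R$ is admissible for $(X,Y)$ if it is measurable and $g(X),g(Y)\in\mathcal L^2$. $(X,Y)\in\mathrm{IC}_r$ means $\mathrm{Corr}(X,Y)=\mathrm{Corr}(g(X),g(Y))=r$ for all admissible $g$; $(X,Y)\in\mathrm{IC}^{\uparrow}_r$ means $\mathrm{Corr}(X,Y)=\mathrm{Corr}(g(X),g(Y))=r$ for all admissible increasing (non-strictly) $g$. $\mathrm{Supp}(Y)=\{x:\mathbb P(x-\epsilon<Y\le x+\epsilon)>0\ \forall\epsilon>0\}$. *)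

theory Defs
  imports "HOL-Probability.Probability"
begin

definition atomless :: "'a measure \<Rightarrow> bool" where
  "atomless M \<longleftrightarrow> (\<forall>A\<in>sets M. measure M A > 0 \<longrightarrow>
      (\<exists>B\<in>sets M. B \<subseteq> A \<and> 0 < measure M B \<and> measure M B < measure M A))"

definition L2 :: "'a measure \<Rightarrow> ('a \<Rightarrow> real) \<Rightarrow> bool" where
  "L2 M X \<longleftrightarrow> X \<in> borel_measurable M \<and> integrable M (\<lambda>\<omega>. (X \<omega>)\<^sup>2) \<and>
      \<not> (\<exists>c. AE \<omega> in M. X \<omega> = c)"

definition cov :: "'a measure \<Rightarrow> ('a \<Rightarrow> real) \<Rightarrow> ('a \<Rightarrow> real) \<Rightarrow> real" where
  "cov M X Y = (\<integral>\<omega>. (X \<omega> - (\<integral>\<eta>. X \<eta> \<partial>M)) * (Y \<omega> - (\<integral>\<eta>. Y \<eta> \<partial>M)) \<partial>M)"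

definition corr :: "'a measure \<Rightarrow> ('a \<Rightarrow> real) \<Rightarrow> ('a \<Rightarrow> real) \<Rightarrow> real" where
  "corr M X Y = cov M X Y / sqrt (cov M X X * cov M Y Y)"

definition admissible :: "'a measure \<Rightarrow> (real \<Rightarrow> real) \<Rightarrow> ('a \<Rightarrow> real) \<Rightarrow> ('a \<Rightarrow> real) \<Rightarrow> bool" where
  "admissible M g X Y \<longleftrightarrow> g \<in> borel_measurable borel \<and> L2 M (g \<circ> X) \<and> L2 M (g \<circ> Y)"

definition IC :: "'a measure \<Rightarrow> real \<Rightarrow> ('a \<Rightarrow> real) \<Rightarrow> ('a \<Rightarrow> real) \<Rightarrow> bool" where
  "IC M r X Y \<longleftrightarrow> corr M X Y = r \<and>
     (\<forall>g. admissible M g X Y \<longrightarrow> corr M (g \<circ> X) (g \<circ> Y) = r)"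

definition IC_mono :: "'a measure \<Rightarrow> real \<Rightarrow> ('a \<Rightarrow> real) \<Rightarrow> ('a \<Rightarrow> real) \<Rightarrow> bool" where
  "IC_mono M r X Y \<longleftrightarrow> corr M X Y = r \<and>
     (\<forall>g. admissible M g X Y \<longrightarrow> mono g \<longrightarrow> corr M (g \<circ> X) (g \<circ> Y) = r)"

definition supp :: "'a measure \<Rightarrow> ('a \<Rightarrow> real) \<Rightarrow> real set" where
  "supp M Y = {x. \<forall>\<epsilon>>0. measure M {\<omega>\<in>space M. x - \<epsilon> < Y \<omega> \<and> Y \<omega> \<le> x + \<epsilon>} > 0}"

end

theory Submission
  imports Defs
begin


context prob_space
begin

definition sqi :: "('a \<Rightarrow> real) \<Rightarrow> bool" where
  "sqi f \<longleftrightarrow> f \<in> borel_measurable M \<and> integrable M (\<lambda>\<omega>. (f \<omega>)\<^sup>2)"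

lemma sqi_meas: "sqi f \<Longrightarrow> f \<in> borel_measurable M"
  by (simp add: sqi_def)

lemma sqi_int: "sqi f \<Longrightarrow> integrable M f"
  unfolding sqi_def using square_integrable_imp_integrable by blast

lemma sqi_mult: assumes "sqi f" "sqi g" shows "integrable M (\<lambda>\<omega>. f \<omega> * g \<omega>)"
proof (rule Bochner_Integration.integrable_bound)
  show "integrable M (\<lambda>\<omega>. (f \<omega>)\<^sup>2 + (g \<omega>)\<^sup>2)"
    using assms unfolding sqi_def by auto
  show "(\<lambda>\<omega>. f \<omega> * g \<omega>) \<in> borel_measurable M"
    using assms unfolding sqi_def by auto
  show "AE x in M. norm (f x * g x) \<le> norm ((f x)\<^sup>2 + (g x)\<^sup>2)"
  proof (rule AE_I2)
    fix x
    have "\<bar>f x * g x\<bar> \<le> (f x)\<^sup>2 + (g x)\<^sup>2"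
    proof -
      have h1: "2 * (\<bar>f x\<bar> * \<bar>g x\<bar>) \<le> (f x)\<^sup>2 + (g x)\<^sup>2"
        using sum_squares_bound[of "\<bar>f x\<bar>" "\<bar>g x\<bar>"] by (simp add: mult.assoc)
      have h2: "0 \<le> \<bar>f x\<bar> * \<bar>g x\<bar>" by simp
      show ?thesis using h1 h2 unfolding abs_mult by linarith
    qed
    then show "norm (f x * g x) \<le> norm ((f x)\<^sup>2 + (g x)\<^sup>2)" by simp
  qed
qed

lemma sqi_add: assumes "sqi f" "sqi g" shows "sqi (\<lambda>\<omega>. f \<omega> + g \<omega>)"
proof -
  have "integrable M (\<lambda>\<omega>. (f \<omega>)\<^sup>2 + 2 * (f \<omega> * g \<omega>) + (g \<omega>)\<^sup>2)"
    using assms sqi_mult[OF assms] unfolding sqi_def by auto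
  moreover have "(\<lambda>\<omega>. (f \<omega>)\<^sup>2 + 2 * (f \<omega> * g \<omega>) + (g \<omega>)\<^sup>2) = (\<lambda>\<omega>. (f \<omega> + g \<omega>)\<^sup>2)"
    by (auto simp: power2_eq_square algebra_simps)
  ultimately show ?thesis using assms unfolding sqi_def by auto
qed

lemma sqi_cmult: assumes "sqi f" shows "sqi (\<lambda>\<omega>. c * f \<omega>)"
proof -
  have "integrable M (\<lambda>\<omega>. c\<^sup>2 * (f \<omega>)\<^sup>2)" using assms unfolding sqi_def by auto
  moreover have "(\<lambda>\<omega>. c\<^sup>2 * (f \<omega>)\<^sup>2) = (\<lambda>\<omega>. (c * f \<omega>)\<^sup>2)"
    by (auto simp: power2_eq_square algebra_simps)
  ultimately show ?thesis using assms unfolding sqi_def by auto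
qed

lemma sqi_const: "sqi (\<lambda>\<omega>. c)"
  unfolding sqi_def by auto

lemma sqi_bounded: assumes "f \<in> borel_measurable M" "\<And>\<omega>. \<bar>f \<omega>\<bar> \<le> B" shows "sqi f"
proof -
  have "integrable M (\<lambda>\<omega>. (f \<omega>)\<^sup>2)"
  proof (rule Bochner_Integration.integrable_bound[where f="\<lambda>_. B\<^sup>2"])
    show "AE x in M. norm ((f x)\<^sup>2) \<le> norm (B\<^sup>2)"
    proof (rule AE_I2)
      fix x
      have "\<bar>f x\<bar> \<le> \<bar>B\<bar>" using assms(2)[of x] by linarith
      then have "(f x)\<^sup>2 \<le> B\<^sup>2" by (simp add: abs_le_square_iff)
      then show "norm ((f x)\<^sup>2) \<le> norm (B\<^sup>2)" by simp
    qed
  qed (use assms in auto)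
  then show ?thesis using assms unfolding sqi_def by auto
qed

definition Cv :: "('a \<Rightarrow> real) \<Rightarrow> ('a \<Rightarrow> real) \<Rightarrow> real" where
  "Cv f g = expectation (\<lambda>\<omega>. f \<omega> * g \<omega>) - expectation f * expectation g"

lemma cov_Cv: assumes "sqi f" "sqi g" shows "cov M f g = Cv f g"
proof -
  let ?a = "expectation f" and ?b = "expectation g"
  have If: "integrable M f" and Ig: "integrable M g" using assms sqi_int by auto
  have Ifg: "integrable M (\<lambda>\<omega>. f \<omega> * g \<omega>)" using sqi_mult assms by auto
  have "(\<lambda>\<omega>. (f \<omega> - ?a) * (g \<omega> - ?b)) = (\<lambda>\<omega>. f \<omega> * g \<omega> - ?b * f \<omega> - ?a * g \<omega> + ?a * ?b)"
    by (auto simp: algebra_simps)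
  then have "cov M f g = expectation (\<lambda>\<omega>. f \<omega> * g \<omega> - ?b * f \<omega> - ?a * g \<omega> + ?a * ?b)"
    unfolding cov_def by simp
  also have "\<dots> = expectation (\<lambda>\<omega>. f \<omega> * g \<omega>) - ?b * ?a - ?a * ?b + ?a * ?b"
    using If Ig Ifg prob_space by simp
  finally show ?thesis unfolding Cv_def by simp
qed

end


context prob_space
begin

lemma Cv_lin:
  assumes "sqi f1" "sqi f2" "sqi g1" "sqi g2"
  shows "Cv (\<lambda>\<omega>. a * f1 \<omega> + b * f2 \<omega>) (\<lambda>\<omega>. c * g1 \<omega> + d * g2 \<omega>) =
     a * c * Cv f1 g1 + a * d * Cv f1 g2 + b * c * Cv f2 g1 + b * d * Cv f2 g2"
proof -
  have i: "integrable M f1" "integrable M f2" "integrable M g1" "integrable M g2"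
    using assms sqi_int by auto
  have p: "integrable M (\<lambda>\<omega>. f1 \<omega> * g1 \<omega>)" "integrable M (\<lambda>\<omega>. f1 \<omega> * g2 \<omega>)"
     "integrable M (\<lambda>\<omega>. f2 \<omega> * g1 \<omega>)" "integrable M (\<lambda>\<omega>. f2 \<omega> * g2 \<omega>)"
    using assms sqi_mult by auto
  have e: "(\<lambda>\<omega>. (a * f1 \<omega> + b * f2 \<omega>) * (c * g1 \<omega> + d * g2 \<omega>)) =
    (\<lambda>\<omega>. (a*c) * (f1 \<omega> * g1 \<omega>) + (a*d) * (f1 \<omega> * g2 \<omega>) + (b*c) * (f2 \<omega> * g1 \<omega>) + (b*d) * (f2 \<omega> * g2 \<omega>))"
    by (auto simp: algebra_simps)
  let ?E = expectation
  have E1: "?E (\<lambda>\<omega>. (a*c) * (f1 \<omega> * g1 \<omega>) + (a*d) * (f1 \<omega> * g2 \<omega>) + (b*c) * (f2 \<omega> * g1 \<omega>) + (b*d) * (f2 \<omega> * g2 \<omega>))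
     = (a*c) * ?E (\<lambda>\<omega>. f1 \<omega> * g1 \<omega>) + (a*d) * ?E (\<lambda>\<omega>. f1 \<omega> * g2 \<omega>) + (b*c) * ?E (\<lambda>\<omega>. f2 \<omega> * g1 \<omega>) + (b*d) * ?E (\<lambda>\<omega>. f2 \<omega> * g2 \<omega>)"
    using p by (simp add: integral_add)
  have E2: "?E (\<lambda>\<omega>. a * f1 \<omega> + b * f2 \<omega>) = a * ?E f1 + b * ?E f2"
    using i by simp
  have E3: "?E (\<lambda>\<omega>. c * g1 \<omega> + d * g2 \<omega>) = c * ?E g1 + d * ?E g2"
    using i by simp
  show ?thesis unfolding Cv_def e E1 E2 E3 by (simp add: algebra_simps)
qed

lemma Cv_sym: "Cv f g = Cv g f"
  unfolding Cv_def by (simp add: mult.commute)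

lemma Cv_const_right: "Cv f (\<lambda>\<omega>. c) = 0"
  unfolding Cv_def using prob_space by simp

lemma Cv_nonneg: assumes "sqi f" shows "0 \<le> Cv f f"
proof -
  have "cov M f f = expectation (\<lambda>\<omega>. (f \<omega> - expectation f)\<^sup>2)"
    unfolding cov_def by (simp add: power2_eq_square)
  also have "\<dots> \<ge> 0" by (rule integral_nonneg_AE) auto
  finally show ?thesis using cov_Cv[OF assms assms] by simp
qed

lemma Cv_zero_AE: assumes "sqi f" "Cv f f = 0" shows "AE \<omega> in M. f \<omega> = expectation f"
proof -
  have "expectation (\<lambda>\<omega>. (f \<omega> - expectation f)\<^sup>2) = 0"
    using cov_Cv[OF assms(1) assms(1)] assms(2) unfolding cov_def by (simp add: power2_eq_square)
  moreover have "integrable M (\<lambda>\<omega>. (f \<omega> - expectation f)\<^sup>2)"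
  proof -
    have "sqi (\<lambda>\<omega>. f \<omega> + (- expectation f))"
      using sqi_add[OF assms(1) sqi_const[of "- expectation f"]] by simp
    then show ?thesis unfolding sqi_def by simp
  qed
  ultimately have "AE \<omega> in M. (f \<omega> - expectation f)\<^sup>2 = 0"
    using integral_nonneg_eq_0_iff_AE[of M "\<lambda>\<omega>. (f \<omega> - expectation f)\<^sup>2"] by auto
  then show ?thesis by auto
qed

lemma Cv_pos: assumes "sqi f" "\<not> (\<exists>c. AE \<omega> in M. f \<omega> = c)" shows "0 < Cv f f"
proof -
  have "Cv f f \<noteq> 0" using Cv_zero_AE[OF assms(1)] assms(2) by blast
  then show ?thesis using Cv_nonneg[OF assms(1)] by linarith
qed

lemma L2_sqi: "L2 M X \<Longrightarrow> sqi X"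
  unfolding L2_def sqi_def by auto

lemma Cv_CS: assumes "sqi f" "sqi g" shows "(Cv f g)\<^sup>2 \<le> Cv f f * Cv g g"
proof -
  have q: "0 \<le> Cv f f - 2 * t * Cv f g + t\<^sup>2 * Cv g g" for t
  proof -
    have "0 \<le> Cv (\<lambda>\<omega>. 1 * f \<omega> + (-t) * g \<omega>) (\<lambda>\<omega>. 1 * f \<omega> + (-t) * g \<omega>)"
      by (rule Cv_nonneg[OF sqi_add[OF sqi_cmult[OF assms(1)] sqi_cmult[OF assms(2)]]])
    also have "\<dots> = Cv f f + (-t) * Cv f g + (-t) * Cv g f + (-t) * (-t) * Cv g g"
      using Cv_lin[OF assms assms, of 1 "-t" 1 "-t"] by simp
    also have "\<dots> = Cv f f - 2 * t * Cv f g + t\<^sup>2 * Cv g g"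
      using Cv_sym[of g f] by (simp add: power2_eq_square)
    finally show ?thesis .
  qed
  show ?thesis
  proof (cases "Cv g g = 0")
    case True
    have "Cv f g = 0"
    proof (rule ccontr)
      assume ne: "Cv f g \<noteq> 0"
      have "0 \<le> Cv f f - 2 * ((Cv f f + 1) / (2 * Cv f g)) * Cv f g"
        using q[of "(Cv f f + 1) / (2 * Cv f g)"] True by simp
      also have "\<dots> = -1" using ne by (simp add: field_simps)
      finally show False by simp
    qed
    then show ?thesis using True by simp
  next
    case False
    then have pos: "0 < Cv g g" using Cv_nonneg[OF assms(2)] by simp
    define t where "t = Cv f g / Cv g g"
    have "0 \<le> Cv f f - 2 * t * Cv f g + t\<^sup>2 * Cv g g"
      by (rule q)
    also have "t\<^sup>2 * Cv g g = t * Cv f g"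
      using pos unfolding t_def by (simp add: power2_eq_square)
    finally have "0 \<le> Cv f f - t * Cv f g" by simp
    then have "0 \<le> (Cv f f - t * Cv f g) * Cv g g" using pos by simp
    also have "(Cv f f - t * Cv f g) * Cv g g = Cv f f * Cv g g - (Cv f g)\<^sup>2"
      using pos unfolding t_def by (simp add: power2_eq_square algebra_simps)
    finally show ?thesis by simp
  qed
qed

lemma strict_mono_nondeg:
  assumes "L2 M X" "strict_mono (g :: real \<Rightarrow> real)"
  shows "\<not> (\<exists>c. AE \<omega> in M. g (X \<omega>) = c)"
proof
  assume "\<exists>c. AE \<omega> in M. g (X \<omega>) = c"
  then obtain c where c: "AE \<omega> in M. g (X \<omega>) = c" by auto
  define x0 where "x0 = (SOME x. g x = c)"
  have "AE \<omega> in M. X \<omega> = x0"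
    using c
  proof (rule AE_mp, intro AE_I2 impI)
    fix \<omega> assume "g (X \<omega>) = c"
    then have "g x0 = c" unfolding x0_def by (rule someI[of "\<lambda>x. g x = c"])
    then have "g (X \<omega>) = g x0" using \<open>g (X \<omega>) = c\<close> by simp
    then show "X \<omega> = x0" by (simp add: strict_mono_eq[OF assms(2)])
  qed
  then show False using assms(1) unfolding L2_def by auto
qed

end


lemma lim0:
  fixes a b c a1 b1 c1 a2 b2 c2 r :: real
  assumes H: "\<And>e. 0 < e \<Longrightarrow> a*e*e + b*e + c = r * sqrt ((a1*e*e + b1*e + c1) * (a2*e*e + b2*e + c2))"
  shows "c = r * sqrt (c1 * c2)"
proof -
  define f where "f = (\<lambda>e::real. a*e*e + b*e + c - r * sqrt ((a1*e*e + b1*e + c1) * (a2*e*e + b2*e + c2)))"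
  have "isCont f 0" unfolding f_def by (intro continuous_intros)
  then have "(f \<longlongrightarrow> f 0) (at 0)" by (simp add: isCont_def)
  then have l1: "(f \<longlongrightarrow> f 0) (at_right 0)" by (simp add: filterlim_at_split)
  have "eventually (\<lambda>e. f e = 0) (at_right 0)"
    using eventually_at_right_less[of "0::real"] by eventually_elim (simp add: f_def H)
  then have l2: "(f \<longlongrightarrow> 0) (at_right 0)" by (rule tendsto_eventually)
  have "f 0 = 0" using tendsto_unique[OF trivial_limit_at_right_real l1 l2] .
  then show ?thesis unfolding f_def by simp
qed

lemma quartic_coeffs:
  fixes d0 d1 d2 d3 d4 :: real
  assumes "\<And>t. t \<in> {0,1,2,3,4} \<Longrightarrow> d0 + d1*t + d2*t^2 + d3*t^3 + d4*t^4 = 0"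
  shows "d0 = 0 \<and> d1 = 0 \<and> d2 = 0 \<and> d3 = 0 \<and> d4 = 0"
proof -
  have "d0 = 0" using assms[of 0] by simp
  moreover have "d0 + d1 + d2 + d3 + d4 = 0" using assms[of 1] by simp
  moreover have "d0 + 2*d1 + 4*d2 + 8*d3 + 16*d4 = 0" using assms[of 2] by simp
  moreover have "d0 + 3*d1 + 9*d2 + 27*d3 + 81*d4 = 0" using assms[of 3] by simp
  moreover have "d0 + 4*d1 + 16*d2 + 64*d3 + 256*d4 = 0" using assms[of 4] by simp
  ultimately show ?thesis by linarith
qed

lemma rank_helper:
  fixes A B A' B' gX gY :: real
  assumes K1: "(A^2*gY - A'^2*gX)^2 = A^2*A'^2*(A*B' - A'*B)^2"
    and K1': "(B^2*gY - B'^2*gX)^2 = B^2*B'^2*(A*B' - A'*B)^2"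
    and K2: "A*B*gY = A'*B'*gX"
    and D: "A*B' - A'*B \<noteq> 0"
  shows "gX^2 = A^2*B^2"
proof -
  define D where "D = A*B' - A'*B"
  have Dn: "D \<noteq> 0" using D unfolding D_def .
  have e1: "B*(A^2*gY - A'^2*gX) = A'*gX*D"
  proof -
    have "B*(A^2*gY - A'^2*gX) = A*(A*B*gY) - B*A'^2*gX" by algebra
    also have "\<dots> = A*(A'*B'*gX) - B*A'^2*gX" using K2 by simp
    also have "\<dots> = A'*gX*D" unfolding D_def by algebra
    finally show ?thesis .
  qed
  have e2: "A*(B^2*gY - B'^2*gX) = - (B'*gX*D)"
  proof -
    have "A*(B^2*gY - B'^2*gX) = B*(A*B*gY) - A*B'^2*gX" by algebra
    also have "\<dots> = B*(A'*B'*gX) - A*B'^2*gX" using K2 by simp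
    also have "\<dots> = - (B'*gX*D)" unfolding D_def by algebra
    finally show ?thesis .
  qed
  have f1: "A'^2 * (gX^2 - A^2*B^2) * D^2 = 0"
  proof -
    have "(A'*gX*D)^2 = B^2 * (A^2*A'^2*D^2)"
      using K1 e1[symmetric] unfolding D_def by (simp add: power_mult_distrib)
    then show ?thesis by algebra
  qed
  have f2: "B'^2 * (gX^2 - A^2*B^2) * D^2 = 0"
  proof -
    have "(B'*gX*D)^2 = A^2 * (B^2*B'^2*D^2)"
    proof -
      have "(B'*gX*D)^2 = (A*(B^2*gY - B'^2*gX))^2" using e2 by simp
      also have "\<dots> = A^2 * (B^2*gY - B'^2*gX)^2" by (simp add: power_mult_distrib)
      also have "\<dots> = A^2 * (B^2*B'^2*D^2)" using K1' unfolding D_def by simp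
      finally show ?thesis .
    qed
    then show ?thesis by algebra
  qed
  show ?thesis
  proof (cases "A' = 0 \<and> B' = 0")
    case True
    then show ?thesis using Dn unfolding D_def by simp
  next
    case False
    then show ?thesis using f1 f2 Dn by auto
  qed
qed

definition PR :: "real \<Rightarrow> real \<Rightarrow> real \<Rightarrow> real \<Rightarrow> real \<Rightarrow> real \<Rightarrow> bool" where
  "PR aX bX gX aY bY gY \<longleftrightarrow> (aX*bY = aY*bX \<and> aX*gY = aY*gX \<and> bX*gY = bY*gX) \<or> (gX^2 = aX*bX \<and> gY^2 = aY*bY)"

lemma pair_alg:
  fixes p w q aX bX gX aY bY gY r :: real
  assumes r: "r \<noteq> 0"
    and H: "\<And>t. 0 \<le> t \<Longrightarrow> p + w*t + q*t^2 = r * sqrt ((aX + 2*gX*t + bX*t^2) * (aY + 2*gY*t + bY*t^2))"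
    and Hq: "q = r * sqrt (bX*bY)"
    and nn: "0 \<le> aX" "0 \<le> bX" "0 \<le> aY" "0 \<le> bY" "gX^2 \<le> aX*bX" "gY^2 \<le> aY*bY"
    and GX: "\<And>t. 0 \<le> t \<Longrightarrow> 0 \<le> aX + 2*gX*t + bX*t^2"
    and GY: "\<And>t. 0 \<le> t \<Longrightarrow> 0 \<le> aY + 2*gY*t + bY*t^2"
  shows "PR aX bX gX aY bY gY"
proof -
  define A where "A = sqrt aX"
  define B where "B = sqrt bX"
  define A' where "A' = sqrt aY"
  define B' where "B' = sqrt bY"
  have A2: "aX = A^2" "bX = B^2" "aY = A'^2" "bY = B'^2"
    unfolding A_def B_def A'_def B'_def by (simp_all add: nn)
  have Ann: "0 \<le> A" "0 \<le> B" "0 \<le> A'" "0 \<le> B'"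
    unfolding A_def B_def A'_def B'_def by (simp_all add: nn)
  have Sq: "(p + w*t + q*t^2)^2 = r^2 * ((aX + 2*gX*t + bX*t^2) * (aY + 2*gY*t + bY*t^2))"
    if "0 \<le> t" for t
  proof -
    have "0 \<le> (aX + 2*gX*t + bX*t^2) * (aY + 2*gY*t + bY*t^2)"
      using GX[OF that] GY[OF that] by simp
    then show ?thesis using H[OF that] by (simp add: power_mult_distrib)
  qed
  define d0 where "d0 = p^2 - r^2*(aX*aY)"
  define d1 where "d1 = 2*p*w - 2*r^2*(aX*gY + aY*gX)"
  define d2 where "d2 = w^2 + 2*p*q - r^2*(aX*bY + 4*gX*gY + aY*bX)"
  define d3 where "d3 = 2*w*q - 2*r^2*(gX*bY + bX*gY)"
  define d4 where "d4 = q^2 - r^2*(bX*bY)"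
  have "d0 + d1*t + d2*t^2 + d3*t^3 + d4*t^4 = 0" if "t \<in> {0,1,2,3,4}" for t
  proof -
    have "0 \<le> t" using that by auto
    have "d0 + d1*t + d2*t^2 + d3*t^3 + d4*t^4 =
        (p + w*t + q*t^2)^2 - r^2 * ((aX + 2*gX*t + bX*t^2) * (aY + 2*gY*t + bY*t^2))"
      unfolding d0_def d1_def d2_def d3_def d4_def by algebra
    then show ?thesis using Sq[OF \<open>0 \<le> t\<close>] by simp
  qed
  then have dz: "d0 = 0 \<and> d1 = 0 \<and> d2 = 0 \<and> d3 = 0 \<and> d4 = 0" by (rule quartic_coeffs)
  have p: "p = r*A*A'"
    using H[of 0] unfolding A_def A'_def by (simp add: real_sqrt_mult)
  have q: "q = r*B*B'"
    using Hq unfolding B_def B'_def by (simp add: real_sqrt_mult)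
  have r2: "r^2 \<noteq> 0" using r by simp
  have e1: "A*A'*w = r*(A^2*gY + A'^2*gX)"
  proof -
    have "r * (A*A'*w) = r * (r*(A^2*gY + A'^2*gX))"
      using dz unfolding d1_def p A2 by algebra
    then show ?thesis using r by simp
  qed
  have e3: "B*B'*w = r*(B^2*gY + B'^2*gX)"
  proof -
    have "r * (B*B'*w) = r * (r*(B^2*gY + B'^2*gX))"
      using dz unfolding d3_def q A2 by algebra
    then show ?thesis using r by simp
  qed
  have e2: "w^2 + 2*r^2*A*A'*B*B' = r^2*(A^2*B'^2 + 4*gX*gY + A'^2*B^2)"
    using dz unfolding d2_def p q A2 by algebra
  have K2: "(A*B' - A'*B) * (A*B*gY - A'*B'*gX) = 0"
  proof -
    have "r * (B*B'*(A^2*gY + A'^2*gX)) = r * (A*A'*(B^2*gY + B'^2*gX))"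
    proof -
      have "r * (B*B'*(A^2*gY + A'^2*gX)) = B*B'*(A*A'*w)" using e1 by algebra
      also have "\<dots> = A*A'*(B*B'*w)" by algebra
      also have "\<dots> = r * (A*A'*(B^2*gY + B'^2*gX))" using e3 by algebra
      finally show ?thesis .
    qed
    then have "B*B'*(A^2*gY + A'^2*gX) = A*A'*(B^2*gY + B'^2*gX)" using r by simp
    then show ?thesis by algebra
  qed
  have K1: "(A^2*gY - A'^2*gX)^2 = A^2*A'^2*(A*B' - A'*B)^2"
  proof -
    have "r^2 * (A^2*gY - A'^2*gX)^2 = r^2 * (A^2*A'^2*(A*B' - A'*B)^2)"
    proof -
      have "r^2 * (A^2*gY + A'^2*gX)^2 = (A*A'*w)^2" using e1 by algebra
      then show ?thesis using e2 by algebra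
    qed
    then show ?thesis using r2 by simp
  qed
  have K1': "(B^2*gY - B'^2*gX)^2 = B^2*B'^2*(A*B' - A'*B)^2"
  proof -
    have "r^2 * (B^2*gY - B'^2*gX)^2 = r^2 * (B^2*B'^2*(A*B' - A'*B)^2)"
    proof -
      have "r^2 * (B^2*gY + B'^2*gX)^2 = (B*B'*w)^2" using e3 by algebra
      then show ?thesis using e2 by algebra
    qed
    then show ?thesis using r2 by simp
  qed
  show ?thesis
  proof (cases "A*B' - A'*B = 0")
    case True
    have a: "aX*bY = aY*bX"
    proof -
      have "A*B' = A'*B" using True by simp
      then have "(A*B')^2 = (A'*B)^2" by simp
      then show ?thesis unfolding A2 by (simp add: power_mult_distrib)
    qed
    have b: "aX*gY = aY*gX" using K1 True unfolding A2 by simp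
    have c: "bX*gY = bY*gX" using K1' True unfolding A2 by simp
    show ?thesis unfolding PR_def using a b c by simp
  next
    case False
    have K2': "A*B*gY = A'*B'*gX" using K2 False by simp
    have x: "gX^2 = A^2*B^2" by (rule rank_helper[OF K1 K1' K2' False])
    have y: "gY^2 = A'^2*B'^2"
    proof (rule rank_helper[where A=A' and B=B' and A'=A and B'=B and gX=gY and gY=gX])
      show "(A'^2*gX - A^2*gY)^2 = A'^2*A^2*(A'*B - A*B')^2" using K1 by algebra
      show "(B'^2*gX - B^2*gY)^2 = B'^2*B^2*(A'*B - A*B')^2" using K1' by algebra
      show "A'*B'*gX = A*B*gY" using K2' by simp
      show "A'*B - A*B' \<noteq> 0" using False by simp
    qed
    show ?thesis unfolding PR_def A2 using x y by (simp add: power_mult_distrib)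
  qed
qed



lemma divide_eq_imp: fixes a s r :: real assumes "0 < s" "a / s = r" shows "a = r * s"
  using assms by (auto simp: field_simps)

context prob_space
begin

lemma Cv_lin1:
  assumes "sqi f1" "sqi f2" "sqi g1" "sqi g2"
  shows "Cv (\<lambda>\<omega>. f1 \<omega> + t * f2 \<omega>) (\<lambda>\<omega>. g1 \<omega> + t * g2 \<omega>) =
     Cv f1 g1 + (Cv f1 g2 + Cv f2 g1) * t + Cv f2 g2 * t^2"
  using Cv_lin[OF assms, of 1 t 1 t] by (simp add: power2_eq_square algebra_simps)

lemma Cv_lin2:
  assumes "sqi f1" "sqi f2" "sqi g1" "sqi g2"
  shows "Cv (\<lambda>\<omega>. e * f1 \<omega> + f2 \<omega>) (\<lambda>\<omega>. e * g1 \<omega> + g2 \<omega>) =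
     Cv f1 g1 * e * e + (Cv f1 g2 + Cv f2 g1) * e + Cv f2 g2"
  using Cv_lin[OF assms, of e 1 e 1] by (simp add: algebra_simps)

lemma corr_Cv:
  assumes "sqi f" "sqi g" "0 < Cv f f" "0 < Cv g g"
  shows "corr M f g = Cv f g / sqrt (Cv f f * Cv g g)"
  unfolding corr_def using cov_Cv assms by simp

lemma lemmaA:
  assumes icm: "IC_mono M r X Y" and LX: "L2 M X" and LY: "L2 M Y" and h: "mono h"
    and sX: "sqi (\<lambda>\<omega>. h (X \<omega>))" and sY: "sqi (\<lambda>\<omega>. h (Y \<omega>))"
  shows "Cv (\<lambda>\<omega>. h (X \<omega>)) (\<lambda>\<omega>. h (Y \<omega>)) =
    r * sqrt (Cv (\<lambda>\<omega>. h (X \<omega>)) (\<lambda>\<omega>. h (X \<omega>)) * Cv (\<lambda>\<omega>. h (Y \<omega>)) (\<lambda>\<omega>. h (Y \<omega>)))"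
proof -
  have sX0: "sqi X" and sY0: "sqi Y" using LX LY L2_sqi by auto
  let ?hX = "\<lambda>\<omega>. h (X \<omega>)" and ?hY = "\<lambda>\<omega>. h (Y \<omega>)"
  have key: "Cv X Y * e * e + (Cv X ?hY + Cv ?hX Y) * e + Cv ?hX ?hY =
    r * sqrt ((Cv X X * e * e + (Cv X ?hX + Cv ?hX X) * e + Cv ?hX ?hX) *
              (Cv Y Y * e * e + (Cv Y ?hY + Cv ?hY Y) * e + Cv ?hY ?hY))" if e: "0 < e" for e
  proof -
    define g where "g = (\<lambda>x. e * x + h x)"
    have mg: "mono g" unfolding g_def mono_def
    proof (intro allI impI)
      fix x y :: real assume "x \<le> y"
      then have "e * x \<le> e * y" "h x \<le> h y" using e h by (auto simp: mono_def)
      then show "e * x + h x \<le> e * y + h y" by simp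
    qed
    have smg: "strict_mono g" unfolding g_def strict_mono_def
    proof (intro allI impI)
      fix x y :: real assume "x < y"
      then have "e * x < e * y" "h x \<le> h y" using e h by (auto simp: mono_def)
      then show "e * x + h x < e * y + h y" by simp
    qed
    have gX: "sqi (\<lambda>\<omega>. g (X \<omega>))" unfolding g_def by (rule sqi_add[OF sqi_cmult[OF sX0] sX])
    have gY: "sqi (\<lambda>\<omega>. g (Y \<omega>))" unfolding g_def by (rule sqi_add[OF sqi_cmult[OF sY0] sY])
    have ndX: "\<not> (\<exists>c. AE \<omega> in M. g (X \<omega>) = c)" by (rule strict_mono_nondeg[OF LX smg])
    have ndY: "\<not> (\<exists>c. AE \<omega> in M. g (Y \<omega>) = c)" by (rule strict_mono_nondeg[OF LY smg])
    have "L2 M (g \<circ> X)" using gX ndX unfolding L2_def sqi_def by (simp add: comp_def)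
    moreover have "L2 M (g \<circ> Y)" using gY ndY unfolding L2_def sqi_def by (simp add: comp_def)
    moreover have "g \<in> borel_measurable borel" by (rule borel_measurable_mono[OF mg])
    ultimately have "admissible M g X Y" unfolding admissible_def by simp
    then have "corr M (g \<circ> X) (g \<circ> Y) = r" using icm mg unfolding IC_mono_def by simp
    then have c: "corr M (\<lambda>\<omega>. g (X \<omega>)) (\<lambda>\<omega>. g (Y \<omega>)) = r" by (simp add: comp_def)
    have pX: "0 < Cv (\<lambda>\<omega>. g (X \<omega>)) (\<lambda>\<omega>. g (X \<omega>))" by (rule Cv_pos[OF gX ndX])
    have pY: "0 < Cv (\<lambda>\<omega>. g (Y \<omega>)) (\<lambda>\<omega>. g (Y \<omega>))" by (rule Cv_pos[OF gY ndY])
    have "Cv (\<lambda>\<omega>. g (X \<omega>)) (\<lambda>\<omega>. g (Y \<omega>)) = r * sqrt (Cv (\<lambda>\<omega>. g (X \<omega>)) (\<lambda>\<omega>. g (X \<omega>)) * Cv (\<lambda>\<omega>. g (Y \<omega>)) (\<lambda>\<omega>. g (Y \<omega>)))"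
    proof -
      have sp: "0 < sqrt (Cv (\<lambda>\<omega>. g (X \<omega>)) (\<lambda>\<omega>. g (X \<omega>)) * Cv (\<lambda>\<omega>. g (Y \<omega>)) (\<lambda>\<omega>. g (Y \<omega>)))"
        using pX pY by simp
      have q: "Cv (\<lambda>\<omega>. g (X \<omega>)) (\<lambda>\<omega>. g (Y \<omega>)) / sqrt (Cv (\<lambda>\<omega>. g (X \<omega>)) (\<lambda>\<omega>. g (X \<omega>)) * Cv (\<lambda>\<omega>. g (Y \<omega>)) (\<lambda>\<omega>. g (Y \<omega>))) = r"
        using c corr_Cv[OF gX gY pX pY] by simp
      show ?thesis by (rule divide_eq_imp[OF sp q])
    qed
    then show ?thesis unfolding g_def
      using Cv_lin2[OF sX0 sX sY0 sY, of e] Cv_lin2[OF sX0 sX sX0 sX, of e] Cv_lin2[OF sY0 sY sY0 sY, of e]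
      by simp
  qed
  have "Cv ?hX ?hY = r * sqrt (Cv ?hX ?hX * Cv ?hY ?hY)"
    by (rule lim0[OF key])
  then show ?thesis .
qed

lemma pair_omega:
  assumes icm: "IC_mono M r X Y" and LX: "L2 M X" and LY: "L2 M Y" and r: "r \<noteq> 0"
    and h1: "mono h1" and h2: "mono h2"
    and s1X: "sqi (\<lambda>\<omega>. h1 (X \<omega>))" and s1Y: "sqi (\<lambda>\<omega>. h1 (Y \<omega>))"
    and s2X: "sqi (\<lambda>\<omega>. h2 (X \<omega>))" and s2Y: "sqi (\<lambda>\<omega>. h2 (Y \<omega>))"
  shows "PR (Cv (\<lambda>\<omega>. h1 (X \<omega>)) (\<lambda>\<omega>. h1 (X \<omega>))) (Cv (\<lambda>\<omega>. h2 (X \<omega>)) (\<lambda>\<omega>. h2 (X \<omega>)))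
            (Cv (\<lambda>\<omega>. h1 (X \<omega>)) (\<lambda>\<omega>. h2 (X \<omega>)))
            (Cv (\<lambda>\<omega>. h1 (Y \<omega>)) (\<lambda>\<omega>. h1 (Y \<omega>))) (Cv (\<lambda>\<omega>. h2 (Y \<omega>)) (\<lambda>\<omega>. h2 (Y \<omega>)))
            (Cv (\<lambda>\<omega>. h1 (Y \<omega>)) (\<lambda>\<omega>. h2 (Y \<omega>)))"
proof -
  let ?aX = "Cv (\<lambda>\<omega>. h1 (X \<omega>)) (\<lambda>\<omega>. h1 (X \<omega>))"
  let ?bX = "Cv (\<lambda>\<omega>. h2 (X \<omega>)) (\<lambda>\<omega>. h2 (X \<omega>))"
  let ?gX = "Cv (\<lambda>\<omega>. h1 (X \<omega>)) (\<lambda>\<omega>. h2 (X \<omega>))"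
  let ?aY = "Cv (\<lambda>\<omega>. h1 (Y \<omega>)) (\<lambda>\<omega>. h1 (Y \<omega>))"
  let ?bY = "Cv (\<lambda>\<omega>. h2 (Y \<omega>)) (\<lambda>\<omega>. h2 (Y \<omega>))"
  let ?gY = "Cv (\<lambda>\<omega>. h1 (Y \<omega>)) (\<lambda>\<omega>. h2 (Y \<omega>))"
  let ?p = "Cv (\<lambda>\<omega>. h1 (X \<omega>)) (\<lambda>\<omega>. h1 (Y \<omega>))"
  let ?w = "Cv (\<lambda>\<omega>. h1 (X \<omega>)) (\<lambda>\<omega>. h2 (Y \<omega>)) + Cv (\<lambda>\<omega>. h2 (X \<omega>)) (\<lambda>\<omega>. h1 (Y \<omega>))"
  let ?q = "Cv (\<lambda>\<omega>. h2 (X \<omega>)) (\<lambda>\<omega>. h2 (Y \<omega>))"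
  have symX: "Cv (\<lambda>\<omega>. h2 (X \<omega>)) (\<lambda>\<omega>. h1 (X \<omega>)) = ?gX" by (rule Cv_sym)
  have symY: "Cv (\<lambda>\<omega>. h2 (Y \<omega>)) (\<lambda>\<omega>. h1 (Y \<omega>)) = ?gY" by (rule Cv_sym)
  have VX: "Cv (\<lambda>\<omega>. h1 (X \<omega>) + t * h2 (X \<omega>)) (\<lambda>\<omega>. h1 (X \<omega>) + t * h2 (X \<omega>)) = ?aX + 2*?gX*t + ?bX*t^2" for t
    using Cv_lin1[OF s1X s2X s1X s2X, of t] symX by simp
  have VY: "Cv (\<lambda>\<omega>. h1 (Y \<omega>) + t * h2 (Y \<omega>)) (\<lambda>\<omega>. h1 (Y \<omega>) + t * h2 (Y \<omega>)) = ?aY + 2*?gY*t + ?bY*t^2" for t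
    using Cv_lin1[OF s1Y s2Y s1Y s2Y, of t] symY by simp
  have CXY: "Cv (\<lambda>\<omega>. h1 (X \<omega>) + t * h2 (X \<omega>)) (\<lambda>\<omega>. h1 (Y \<omega>) + t * h2 (Y \<omega>)) = ?p + ?w*t + ?q*t^2" for t
    using Cv_lin1[OF s1X s2X s1Y s2Y, of t] by simp
  have sgX: "sqi (\<lambda>\<omega>. h1 (X \<omega>) + t * h2 (X \<omega>))" for t by (rule sqi_add[OF s1X sqi_cmult[OF s2X]])
  have sgY: "sqi (\<lambda>\<omega>. h1 (Y \<omega>) + t * h2 (Y \<omega>))" for t by (rule sqi_add[OF s1Y sqi_cmult[OF s2Y]])
  show ?thesis
  proof (rule pair_alg[OF r])
    fix t :: real assume t: "0 \<le> t"
    have mg: "mono (\<lambda>x. h1 x + t * h2 x)"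
      unfolding mono_def
    proof (intro allI impI)
      fix x y :: real assume "x \<le> y"
      then have "h1 x \<le> h1 y" "h2 x \<le> h2 y" using h1 h2 by (auto simp: mono_def)
      then have "t * h2 x \<le> t * h2 y" using t by (simp add: mult_left_mono)
      then show "h1 x + t * h2 x \<le> h1 y + t * h2 y" using \<open>h1 x \<le> h1 y\<close> by simp
    qed
    have A: "Cv (\<lambda>\<omega>. h1 (X \<omega>) + t * h2 (X \<omega>)) (\<lambda>\<omega>. h1 (Y \<omega>) + t * h2 (Y \<omega>)) =
      r * sqrt (Cv (\<lambda>\<omega>. h1 (X \<omega>) + t * h2 (X \<omega>)) (\<lambda>\<omega>. h1 (X \<omega>) + t * h2 (X \<omega>)) *
                Cv (\<lambda>\<omega>. h1 (Y \<omega>) + t * h2 (Y \<omega>)) (\<lambda>\<omega>. h1 (Y \<omega>) + t * h2 (Y \<omega>)))"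
      by (rule lemmaA[OF icm LX LY mg sgX sgY])
    show "?p + ?w*t + ?q*t^2 = r * sqrt ((?aX + 2*?gX*t + ?bX*t^2) * (?aY + 2*?gY*t + ?bY*t^2))"
      using A unfolding VX VY CXY .
    show "0 \<le> ?aX + 2*?gX*t + ?bX*t^2" using Cv_nonneg[OF sgX[of t]] unfolding VX .
    show "0 \<le> ?aY + 2*?gY*t + ?bY*t^2" using Cv_nonneg[OF sgY[of t]] unfolding VY .
  next
    show "?q = r * sqrt (?bX * ?bY)" by (rule lemmaA[OF icm LX LY h2 s2X s2Y])
  qed (use Cv_nonneg[OF s1X] Cv_nonneg[OF s2X] Cv_nonneg[OF s1Y] Cv_nonneg[OF s2Y]
        Cv_CS[OF s1X s2X] Cv_CS[OF s1Y s2Y] in auto)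
qed

end


lemma three_points:
  fixes S :: "real set"
  assumes "infinite S \<or> card S > 2"
  obtains a b c where "a \<in> S" "b \<in> S" "c \<in> S" "a < b" "b < c"
proof -
  obtain T where T: "T \<subseteq> S" "card T = 3"
  proof (cases "infinite S")
    case True
    then show ?thesis using infinite_arbitrarily_large[of S 3] that by blast
  next
    case False
    then have "3 \<le> card S" using assms by simp
    then show ?thesis using obtain_subset_with_card_n[of 3 S] that by blast
  qed
  then obtain x y z where xyz: "T = {x,y,z}" "x \<noteq> y" "y \<noteq> z" "x \<noteq> z"
    unfolding card_3_iff by blast
  have in3: "x \<in> S" "y \<in> S" "z \<in> S" using T(1) xyz(1) by auto
  have "\<exists>a b c. a \<in> S \<and> b \<in> S \<and> c \<in> S \<and> a < b \<and> b < c"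
  proof (cases "x < y")
    case xy: True
    show ?thesis
    proof (cases "y < z")
      case True then show ?thesis using xy in3 by blast
    next
      case False then have "z < y" using xyz by simp
      show ?thesis
      proof (cases "x < z")
        case True then show ?thesis using \<open>z < y\<close> in3 by blast
      next
        case False then have "z < x" using xyz by simp
        then show ?thesis using xy in3 by blast
      qed
    qed
  next
    case yx: False then have "y < x" using xyz by simp
    show ?thesis
    proof (cases "x < z")
      case True then show ?thesis using \<open>y < x\<close> in3 by blast
    next
      case False then have "z < x" using xyz by simp
      show ?thesis
      proof (cases "y < z")
        case True then show ?thesis using \<open>z < x\<close> in3 by blast
      next
        case False then have "z < y" using xyz by simp
        then show ?thesis using \<open>y < x\<close> in3 by blast
      qed
    qed
  qed
  then show ?thesis using that by blast
qed

lemma mono_ind: "mono (indicator {t<..} :: real \<Rightarrow> real)"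
  unfolding mono_def by (auto simp: indicator_def)

context prob_space
begin

lemma sqi_ind: fixes X :: "'a \<Rightarrow> real" assumes "X \<in> borel_measurable M" shows "sqi (\<lambda>\<omega>. indicator {t<..} (X \<omega>) :: real)"
proof (rule sqi_bounded[where B=1])
  show "(\<lambda>\<omega>. indicator {t<..} (X \<omega>) :: real) \<in> borel_measurable M"
    using measurable_compose[OF assms borel_measurable_indicator[OF greaterThan_borel[of t]]] by simp
qed (auto simp: indicator_def)

lemma exp_ind:
  fixes f :: "'a \<Rightarrow> real"
  assumes "A \<in> sets M" "\<And>\<omega>. \<omega> \<in> space M \<Longrightarrow> f \<omega> = indicator A \<omega>"
  shows "expectation f = prob A"
proof -
  have "expectation f = expectation (indicator A :: 'a \<Rightarrow> real)"
    by (rule Bochner_Integration.integral_cong[OF refl]) (simp add: assms(2))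
  also have "\<dots> = prob A" using assms(1) by (simp add: Int_absorb2 sets.sets_into_space)
  finally show ?thesis .
qed

lemma Cv_ind:
  fixes X Z :: "'a \<Rightarrow> real"
  assumes [measurable]: "X \<in> borel_measurable M" "Z \<in> borel_measurable M"
  shows "Cv (\<lambda>\<omega>. indicator {s<..} (X \<omega>)) (\<lambda>\<omega>. indicator {t<..} (Z \<omega>)) =
    prob {\<omega>\<in>space M. s < X \<omega> \<and> t < Z \<omega>} - prob {\<omega>\<in>space M. s < X \<omega>} * prob {\<omega>\<in>space M. t < Z \<omega>}"
proof -
  have "expectation (\<lambda>\<omega>. indicator {s<..} (X \<omega>) * indicator {t<..} (Z \<omega>) :: real) = prob {\<omega>\<in>space M. s < X \<omega> \<and> t < Z \<omega>}"
    by (rule exp_ind) (auto simp: indicator_def)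
  moreover have "expectation (\<lambda>\<omega>. indicator {s<..} (X \<omega>) :: real) = prob {\<omega>\<in>space M. s < X \<omega>}"
    by (rule exp_ind) (auto simp: indicator_def)
  moreover have "expectation (\<lambda>\<omega>. indicator {t<..} (Z \<omega>) :: real) = prob {\<omega>\<in>space M. t < Z \<omega>}"
    by (rule exp_ind) (auto simp: indicator_def)
  ultimately show ?thesis unfolding Cv_def by simp
qed

lemma Cv_ind_same:
  fixes X :: "'a \<Rightarrow> real"
  assumes [measurable]: "X \<in> borel_measurable M"
  shows "Cv (\<lambda>\<omega>. indicator {s<..} (X \<omega>)) (\<lambda>\<omega>. indicator {t<..} (X \<omega>)) =
    prob {\<omega>\<in>space M. max s t < X \<omega>} - prob {\<omega>\<in>space M. s < X \<omega>} * prob {\<omega>\<in>space M. t < X \<omega>}"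
proof -
  have "{\<omega>\<in>space M. s < X \<omega> \<and> t < X \<omega>} = {\<omega>\<in>space M. max s t < X \<omega>}" by (auto simp: max_less_iff_conj)
  then show ?thesis using Cv_ind[OF assms assms, of s t] by simp
qed

lemma distr_eq_from_tails:
  fixes X Y :: "'a \<Rightarrow> real"
  assumes [measurable]: "X \<in> borel_measurable M" "Y \<in> borel_measurable M"
    and eq: "\<And>t. prob {\<omega>\<in>space M. t < X \<omega>} = prob {\<omega>\<in>space M. t < Y \<omega>}"
  shows "distr M borel X = distr M borel Y"
proof (rule cdf_unique)
  show "real_distribution (distr M borel X)" "real_distribution (distr M borel Y)" by auto
  show "cdf (distr M borel X) = cdf (distr M borel Y)"
  proof
    fix x
    have c: "cdf (distr M borel Z) x = 1 - prob {\<omega>\<in>space M. x < Z \<omega>}" if [measurable]: "Z \<in> borel_measurable M" for Z :: "'a \<Rightarrow> real"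
    proof -
      have "cdf (distr M borel Z) x = prob (Z -` {..x} \<inter> space M)"
        unfolding cdf_def by (simp add: measure_distr)
      also have "Z -` {..x} \<inter> space M = space M - {\<omega>\<in>space M. x < Z \<omega>}" by auto
      also have "prob \<dots> = 1 - prob {\<omega>\<in>space M. x < Z \<omega>}" by (rule prob_compl) measurable
      finally show ?thesis .
    qed
    show "cdf (distr M borel X) x = cdf (distr M borel Y) x" using c[of X] c[of Y] eq[of x] by simp
  qed
qed

lemma supp_two_thresholds:
  fixes Y :: "'a \<Rightarrow> real"
  assumes [measurable]: "Y \<in> borel_measurable M"
    and S: "infinite (supp M Y) \<or> card (supp M Y) > 2"
  obtains t1 t2 where "t1 < t2" "0 < prob {\<omega>\<in>space M. t2 < Y \<omega>}"
    "prob {\<omega>\<in>space M. t2 < Y \<omega>} < prob {\<omega>\<in>space M. t1 < Y \<omega>}"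
    "prob {\<omega>\<in>space M. t1 < Y \<omega>} < 1"
proof -
  obtain y1 y2 y3 where y: "y1 \<in> supp M Y" "y2 \<in> supp M Y" "y3 \<in> supp M Y" "y1 < y2" "y2 < y3"
    using three_points[OF S] by blast
  define e where "e = min (y2 - y1) (y3 - y2) / 4"
  have e: "0 < e" using y unfolding e_def by simp
  define t1 where "t1 = (y1 + y2) / 2"
  define t2 where "t2 = (y2 + y3) / 2"
  let ?I = "\<lambda>y. {\<omega>\<in>space M. y - e < Y \<omega> \<and> Y \<omega> \<le> y + e}"
  have pos: "0 < prob (?I y)" if "y \<in> supp M Y" for y
    using that e unfolding supp_def by auto
  have ee: "4 * e \<le> y2 - y1" "4 * e \<le> y3 - y2" unfolding e_def by auto
  have tt: "2 * t1 = y1 + y2" "2 * t2 = y2 + y3" unfolding t1_def t2_def by auto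
  have g1: "y1 + e < t1" using y ee e tt by linarith
  have g2: "t1 < y2 - e" using y ee e tt by linarith
  have g3: "y2 + e < t2" using y ee e tt by linarith
  have g4: "t2 < y3 - e" using y ee e tt by linarith
  note g = g1 g2 g3 g4
  have "prob (?I y3) \<le> prob {\<omega>\<in>space M. t2 < Y \<omega>}"
    using g e by (intro finite_measure_mono) auto
  then have A: "0 < prob {\<omega>\<in>space M. t2 < Y \<omega>}" using pos[OF y(3)] by simp
  have "prob {\<omega>\<in>space M. t2 < Y \<omega>} + prob (?I y2) = prob ({\<omega>\<in>space M. t2 < Y \<omega>} \<union> ?I y2)"
    using g e by (intro finite_measure_Union[symmetric]) auto
  also have "\<dots> \<le> prob {\<omega>\<in>space M. t1 < Y \<omega>}"
    using g e by (intro finite_measure_mono) auto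
  finally have B: "prob {\<omega>\<in>space M. t2 < Y \<omega>} < prob {\<omega>\<in>space M. t1 < Y \<omega>}" using pos[OF y(2)] by simp
  have "prob {\<omega>\<in>space M. t1 < Y \<omega>} + prob (?I y1) = prob ({\<omega>\<in>space M. t1 < Y \<omega>} \<union> ?I y1)"
    using g e by (intro finite_measure_Union[symmetric]) auto
  also have "\<dots> \<le> 1" by simp
  finally have C: "prob {\<omega>\<in>space M. t1 < Y \<omega>} < 1" using pos[OF y(1)] by simp
  have "t1 < t2" using g e by simp
  then show ?thesis using that A B C by blast
qed

end


lemma uv_alg:
  fixes u1 u2 v1 v2 :: real
  assumes v: "0 < v2" "v2 < v1" "v1 < 1" and aX: "u1 - u1*u1 \<noteq> 0"
    and p1: "(u1 - u1*u1) * (v2 - v2* v2) = (v1 - v1* v1) * (u2 - u2*u2)"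
    and p2: "(u1 - u1*u1) * (v2 - v1* v2) = (v1 - v1* v1) * (u2 - u1*u2)"
    and p3: "(u2 - u2*u2) * (v2 - v1* v2) = (v2 - v2* v2) * (u2 - u1*u2)"
  shows "u1 = v1 \<and> u2 = v2"
proof -
  have nu1: "1 - u1 \<noteq> 0" using aX by algebra
  have nv1: "1 - v1 \<noteq> 0" using v by simp
  have nv2: "v2 \<noteq> 0" "v2 - v2* v2 \<noteq> 0"
  proof -
    show "v2 \<noteq> 0" using v by simp
    have "v2 * (1 - v2) > 0" using v by (intro mult_pos_pos) auto
    moreover have "v2 - v2 * v2 = v2 * (1 - v2)" by algebra
    ultimately show "v2 - v2* v2 \<noteq> 0" by linarith
  qed
  have nu2: "u2 \<noteq> 0"
  proof
    assume "u2 = 0"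
    then have "(u1 - u1*u1) * (v2 - v2* v2) = 0" using p1 by simp
    then show False using aX nv2 by simp
  qed
  have "(1-u1)*(1-v1)*(u1* v2 - v1*u2) = 0" using p2 by algebra
  then have E1: "u1* v2 - v1*u2 = 0" using nu1 nv1 by simp
  have "u2* v2*((1-u2)*(1-v1) - (1-v2)*(1-u1)) = 0" using p3 by algebra
  then have E2: "(1-u2)*(1-v1) - (1-v2)*(1-u1) = 0" using nu2 nv2 by simp
  have "(u1 - v1) * (v1 - v2) = 0" using E1 E2 by algebra
  then have d: "u1 = v1" using v by simp
  have "v1 * (v2 - u2) = u1 * v2 - v1 * u2" using d by (simp add: algebra_simps)
  then have "v1 * (v2 - u2) = 0" using E1 by simp
  then show ?thesis using d v by simp
qed

context prob_space
begin

lemma Cv_lin_r: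
  assumes "sqi f" "sqi g1" "sqi g2"
  shows "Cv f (\<lambda>\<omega>. g1 \<omega> + c * g2 \<omega>) = Cv f g1 + c * Cv f g2"
  using Cv_lin[OF assms(1) assms(1) assms(2) assms(3), of 1 0 1 c] by simp

lemma transfer:
  assumes icm: "IC_mono M r X Y" and LX: "L2 M X" and LY: "L2 M Y" and r: "r \<noteq> 0"
    and h1: "mono h1" and h2: "mono h2" and h: "mono h"
    and s1X: "sqi (\<lambda>\<omega>. h1 (X \<omega>))" and s1Y: "sqi (\<lambda>\<omega>. h1 (Y \<omega>))"
    and s2X: "sqi (\<lambda>\<omega>. h2 (X \<omega>))" and s2Y: "sqi (\<lambda>\<omega>. h2 (Y \<omega>))"
    and sX: "sqi (\<lambda>\<omega>. h (X \<omega>))" and sY: "sqi (\<lambda>\<omega>. h (Y \<omega>))"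
    and nr: "(Cv (\<lambda>\<omega>. h1 (Y \<omega>)) (\<lambda>\<omega>. h2 (Y \<omega>)))\<^sup>2 \<noteq>
             Cv (\<lambda>\<omega>. h1 (Y \<omega>)) (\<lambda>\<omega>. h1 (Y \<omega>)) * Cv (\<lambda>\<omega>. h2 (Y \<omega>)) (\<lambda>\<omega>. h2 (Y \<omega>))"
  shows "\<exists>c>0. Cv (\<lambda>\<omega>. h1 (X \<omega>)) (\<lambda>\<omega>. h1 (X \<omega>)) * Cv (\<lambda>\<omega>. h1 (Y \<omega>)) (\<lambda>\<omega>. h2 (Y \<omega>) + c * h (Y \<omega>))
            = Cv (\<lambda>\<omega>. h1 (Y \<omega>)) (\<lambda>\<omega>. h1 (Y \<omega>)) * Cv (\<lambda>\<omega>. h1 (X \<omega>)) (\<lambda>\<omega>. h2 (X \<omega>) + c * h (X \<omega>))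
          \<and> Cv (\<lambda>\<omega>. h1 (X \<omega>)) (\<lambda>\<omega>. h1 (X \<omega>)) * Cv (\<lambda>\<omega>. h2 (Y \<omega>) + c * h (Y \<omega>)) (\<lambda>\<omega>. h2 (Y \<omega>) + c * h (Y \<omega>))
            = Cv (\<lambda>\<omega>. h1 (Y \<omega>)) (\<lambda>\<omega>. h1 (Y \<omega>)) * Cv (\<lambda>\<omega>. h2 (X \<omega>) + c * h (X \<omega>)) (\<lambda>\<omega>. h2 (X \<omega>) + c * h (X \<omega>))"
proof (rule ccontr)
  assume nc: "\<not> ?thesis"
  let ?h1Y = "\<lambda>\<omega>. h1 (Y \<omega>)" and ?h2Y = "\<lambda>\<omega>. h2 (Y \<omega>)" and ?hY = "\<lambda>\<omega>. h (Y \<omega>)"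
  have rk: "(Cv ?h1Y (\<lambda>\<omega>. h2 (Y \<omega>) + c * h (Y \<omega>)))\<^sup>2 =
      Cv ?h1Y ?h1Y * Cv (\<lambda>\<omega>. h2 (Y \<omega>) + c * h (Y \<omega>)) (\<lambda>\<omega>. h2 (Y \<omega>) + c * h (Y \<omega>))"
    if c: "0 < c" for c
  proof -
    have mc: "mono (\<lambda>x. h2 x + c * h x)"
      unfolding mono_def
    proof (intro allI impI)
      fix x y :: real assume "x \<le> y"
      then have "h2 x \<le> h2 y" "h x \<le> h y" using h2 h by (auto simp: mono_def)
      then have "c * h x \<le> c * h y" using c by (simp add: mult_left_mono)
      then show "h2 x + c * h x \<le> h2 y + c * h y" using \<open>h2 x \<le> h2 y\<close> by simp
    qed
    have scX: "sqi (\<lambda>\<omega>. h2 (X \<omega>) + c * h (X \<omega>))" by (rule sqi_add[OF s2X sqi_cmult[OF sX]])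
    have scY: "sqi (\<lambda>\<omega>. h2 (Y \<omega>) + c * h (Y \<omega>))" by (rule sqi_add[OF s2Y sqi_cmult[OF sY]])
    have "PR (Cv (\<lambda>\<omega>. h1 (X \<omega>)) (\<lambda>\<omega>. h1 (X \<omega>)))
       (Cv (\<lambda>\<omega>. h2 (X \<omega>) + c * h (X \<omega>)) (\<lambda>\<omega>. h2 (X \<omega>) + c * h (X \<omega>)))
       (Cv (\<lambda>\<omega>. h1 (X \<omega>)) (\<lambda>\<omega>. h2 (X \<omega>) + c * h (X \<omega>)))
       (Cv ?h1Y ?h1Y)
       (Cv (\<lambda>\<omega>. h2 (Y \<omega>) + c * h (Y \<omega>)) (\<lambda>\<omega>. h2 (Y \<omega>) + c * h (Y \<omega>)))
       (Cv ?h1Y (\<lambda>\<omega>. h2 (Y \<omega>) + c * h (Y \<omega>)))"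
      by (rule pair_omega[OF icm LX LY r h1 mc s1X s1Y scX scY])
    then show ?thesis using nc c unfolding PR_def by (auto simp: mult.commute)
  qed
  define g where "g = Cv ?h1Y ?h2Y"
  define d where "d = Cv ?h1Y ?hY"
  define a where "a = Cv ?h1Y ?h1Y"
  define b where "b = Cv ?h2Y ?h2Y"
  define e where "e = Cv ?h2Y ?hY + Cv ?hY ?h2Y"
  define n where "n = Cv ?hY ?hY"
  have R: "(g + c*d)^2 = a * (b + e*c + n*c^2)" if "0 < c" for c
  proof -
    have "Cv ?h1Y (\<lambda>\<omega>. h2 (Y \<omega>) + c * h (Y \<omega>)) = g + c*d"
      unfolding g_def d_def by (rule Cv_lin_r[OF s1Y s2Y sY])
    moreover have "Cv (\<lambda>\<omega>. h2 (Y \<omega>) + c * h (Y \<omega>)) (\<lambda>\<omega>. h2 (Y \<omega>) + c * h (Y \<omega>)) = b + e*c + n*c^2"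
      unfolding b_def e_def n_def by (rule Cv_lin1[OF s2Y sY s2Y sY])
    ultimately show ?thesis using rk[OF that] unfolding a_def by simp
  qed
  have "g^2 - a*b = 0"
  proof -
    have "(g + d)^2 = a * (b + e + n)" using R[of 1] by simp
    moreover have "(g + 2*d)^2 = a * (b + 2*e + 4*n)" using R[of 2] by (simp add: mult.commute)
    moreover have "(g + 3*d)^2 = a * (b + 3*e + 9*n)" using R[of 3] by (simp add: mult.commute)
    ultimately show ?thesis by algebra
  qed
  then show False using nr unfolding g_def a_def b_def by simp
qed

end


context prob_space
begin

lemma iii_main:
  fixes X Y :: "'a \<Rightarrow> real"
  assumes icm: "IC_mono M r X Y" and LX: "L2 M X" and LY: "L2 M Y"
    and S: "infinite (supp M Y) \<or> card (supp M Y) > 2"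
    and neq: "distr M borel X \<noteq> distr M borel Y"
  shows "r = 0"
proof (rule ccontr)
  assume r: "r \<noteq> 0"
  have mX[measurable]: "X \<in> borel_measurable M" and mY[measurable]: "Y \<in> borel_measurable M"
    using LX LY unfolding L2_def by auto
  obtain t1 t2 where t12: "t1 < t2" and tv: "0 < prob {\<omega>\<in>space M. t2 < Y \<omega>}"
    "prob {\<omega>\<in>space M. t2 < Y \<omega>} < prob {\<omega>\<in>space M. t1 < Y \<omega>}"
    "prob {\<omega>\<in>space M. t1 < Y \<omega>} < 1"
    using supp_two_thresholds[OF mY S] by blast
  define u where "u = (\<lambda>t. prob {\<omega>\<in>space M. t < X \<omega>})"
  define v where "v = (\<lambda>t. prob {\<omega>\<in>space M. t < Y \<omega>})"
  have v12: "0 < v t2" "v t2 < v t1" "v t1 < 1" using tv unfolding v_def by auto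
  have CX: "Cv (\<lambda>\<omega>. indicator {s<..} (X \<omega>)) (\<lambda>\<omega>. indicator {t<..} (X \<omega>)) = u (max s t) - u s * u t" for s t
    unfolding u_def by (rule Cv_ind_same[OF mX])
  have CY: "Cv (\<lambda>\<omega>. indicator {s<..} (Y \<omega>)) (\<lambda>\<omega>. indicator {t<..} (Y \<omega>)) = v (max s t) - v s * v t" for s t
    unfolding v_def by (rule Cv_ind_same[OF mY])
  have sIX: "sqi (\<lambda>\<omega>. indicator {t<..} (X \<omega>) :: real)" for t by (rule sqi_ind[OF mX])
  have sIY: "sqi (\<lambda>\<omega>. indicator {t<..} (Y \<omega>) :: real)" for t by (rule sqi_ind[OF mY])
  have mt: "max t1 t2 = t2" "max t1 t1 = t1" "max t2 t2 = t2" using t12 by auto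
  let ?aX = "u t1 - u t1 * u t1" and ?bX = "u t2 - u t2 * u t2" and ?gX = "u t2 - u t1 * u t2"
  let ?aY = "v t1 - v t1 * v t1" and ?bY = "v t2 - v t2 * v t2" and ?gY = "v t2 - v t1 * v t2"
  have aYpos: "0 < ?aY"
  proof -
    have "0 < v t1 * (1 - v t1)" using v12 by (intro mult_pos_pos) auto
    then show ?thesis by (simp add: algebra_simps)
  qed
  have nrY': "?gY^2 \<noteq> ?aY * ?bY"
  proof
    assume "?gY^2 = ?aY * ?bY"
    then have "v t2 * (1 - v t1) * (v t2 - v t1) = 0" by algebra
    then show False using v12 by simp
  qed
  have nrY: "(Cv (\<lambda>\<omega>. indicator {t1<..} (Y \<omega>)) (\<lambda>\<omega>. indicator {t2<..} (Y \<omega>) :: real))\<^sup>2 \<noteq>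
      Cv (\<lambda>\<omega>. indicator {t1<..} (Y \<omega>)) (\<lambda>\<omega>. indicator {t1<..} (Y \<omega>) :: real) *
      Cv (\<lambda>\<omega>. indicator {t2<..} (Y \<omega>)) (\<lambda>\<omega>. indicator {t2<..} (Y \<omega>) :: real)"
    unfolding CY mt using nrY' .
  have PR12: "PR ?aX ?bX ?gX ?aY ?bY ?gY"
    using pair_omega[OF icm LX LY r mono_ind mono_ind sIX sIY sIX sIY, of t1 t2] unfolding CX CY mt .
  have par: "?aX * ?bY = ?aY * ?bX" "?aX * ?gY = ?aY * ?gX" "?bX * ?gY = ?bY * ?gX"
    using PR12 nrY' unfolding PR_def by auto
  have aXnz: "?aX \<noteq> 0"
  proof
    assume aX0: "?aX = 0"
    have mid: "mono (\<lambda>x::real. x)" by (simp add: mono_def)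
    have sX: "sqi (\<lambda>\<omega>. X \<omega>)" using L2_sqi[OF LX] by simp
    have sY: "sqi (\<lambda>\<omega>. Y \<omega>)" using L2_sqi[OF LY] by simp
    obtain c where c: "0 < c" and
      eq: "Cv (\<lambda>\<omega>. indicator {t1<..} (X \<omega>)) (\<lambda>\<omega>. indicator {t1<..} (X \<omega>) :: real) *
            Cv (\<lambda>\<omega>. indicator {t2<..} (Y \<omega>) + c * Y \<omega>) (\<lambda>\<omega>. indicator {t2<..} (Y \<omega>) + c * Y \<omega>)
         = Cv (\<lambda>\<omega>. indicator {t1<..} (Y \<omega>)) (\<lambda>\<omega>. indicator {t1<..} (Y \<omega>) :: real) *
            Cv (\<lambda>\<omega>. indicator {t2<..} (X \<omega>) + c * X \<omega>) (\<lambda>\<omega>. indicator {t2<..} (X \<omega>) + c * X \<omega>)"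
      using transfer[OF icm LX LY r mono_ind mono_ind mid sIX sIY sIX sIY sX sY nrY] by blast
    have sm: "strict_mono (\<lambda>x. indicator {t2<..} x + c * x :: real)"
      unfolding strict_mono_def
    proof (intro allI impI)
      fix x y :: real assume "x < y"
      then have "indicator {t2<..} x \<le> (indicator {t2<..} y :: real)" using mono_ind unfolding mono_def by simp
      moreover have "c * x < c * y" using c \<open>x < y\<close> by simp
      ultimately show "indicator {t2<..} x + c * x < indicator {t2<..} y + c * y" by simp
    qed
    have "0 < Cv (\<lambda>\<omega>. indicator {t2<..} (X \<omega>) + c * X \<omega>) (\<lambda>\<omega>. indicator {t2<..} (X \<omega>) + c * X \<omega>)"
      by (rule Cv_pos[OF sqi_add[OF sIX sqi_cmult[OF sX]] strict_mono_nondeg[OF LX sm]])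
    moreover have "Cv (\<lambda>\<omega>. indicator {t1<..} (X \<omega>)) (\<lambda>\<omega>. indicator {t1<..} (X \<omega>) :: real) = 0"
      using aX0 unfolding CX mt .
    moreover have "Cv (\<lambda>\<omega>. indicator {t1<..} (Y \<omega>)) (\<lambda>\<omega>. indicator {t1<..} (Y \<omega>) :: real) > 0"
      using aYpos unfolding CY mt .
    ultimately show False using eq by simp
  qed
  have u12: "u t1 = v t1 \<and> u t2 = v t2"
    by (rule uv_alg[OF v12(1) v12(2) v12(3) aXnz par])
  have uv: "u t = v t" for t
  proof -
    obtain c where c: "0 < c" and
      eq: "Cv (\<lambda>\<omega>. indicator {t1<..} (X \<omega>)) (\<lambda>\<omega>. indicator {t1<..} (X \<omega>) :: real) *
            Cv (\<lambda>\<omega>. indicator {t1<..} (Y \<omega>)) (\<lambda>\<omega>. indicator {t2<..} (Y \<omega>) + c * indicator {t<..} (Y \<omega>))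
         = Cv (\<lambda>\<omega>. indicator {t1<..} (Y \<omega>)) (\<lambda>\<omega>. indicator {t1<..} (Y \<omega>) :: real) *
            Cv (\<lambda>\<omega>. indicator {t1<..} (X \<omega>)) (\<lambda>\<omega>. indicator {t2<..} (X \<omega>) + c * indicator {t<..} (X \<omega>))"
      using transfer[OF icm LX LY r mono_ind mono_ind mono_ind sIX sIY sIX sIY sIX sIY nrY] by blast
    have "?aX * (?gY + c * (v (max t1 t) - v t1 * v t)) = ?aY * (?gX + c * (u (max t1 t) - u t1 * u t))"
      using eq unfolding Cv_lin_r[OF sIX sIX sIX] Cv_lin_r[OF sIY sIY sIY] CX CY mt .
    then have "?aX * c * (v (max t1 t) - v t1 * v t) = ?aY * c * (u (max t1 t) - u t1 * u t)"
      using par(2) by algebra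
    moreover have "?aX = ?aY" using u12 by simp
    ultimately have "v (max t1 t) - v t1 * v t = u (max t1 t) - u t1 * u t"
      using aXnz c by simp
    then show ?thesis
    proof (cases "t \<le> t1")
      case True
      then have "max t1 t = t1" by simp
      then have "v t1 * (1 - v t) = v t1 * (1 - u t)" using \<open>v (max t1 t) - _ = _\<close> u12 by (simp add: algebra_simps)
      then show ?thesis using v12 by simp
    next
      case False
      then have "max t1 t = t" by simp
      then have "(1 - v t1) * v t = (1 - v t1) * u t" using \<open>v (max t1 t) - _ = _\<close> u12 by (simp add: algebra_simps)
      then show ?thesis using v12 by simp
    qed
  qed
  have "distr M borel X = distr M borel Y"
    by (rule distr_eq_from_tails[OF mX mY]) (use uv in \<open>simp add: u_def v_def\<close>)
  then show False using neq by simp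
qed

end


definition madd :: "'b measure \<Rightarrow> 'b measure \<Rightarrow> 'b measure" where
  "madd A B = measure_of (space A) (sets A) (\<lambda>S. emeasure A S + emeasure B S)"

lemma madd_ms:
  assumes "sets B = sets A"
  shows "measure_space (space A) (sets A) (\<lambda>S. emeasure A S + emeasure B S)"
  unfolding measure_space_def
proof (intro conjI)
  show "sigma_algebra (space A) (sets A)" using measure_space[of A] unfolding measure_space_def by simp
  show "positive (sets A) (\<lambda>S. emeasure A S + emeasure B S)" unfolding positive_def by simp
  show "countably_additive (sets A) (\<lambda>S. emeasure A S + emeasure B S)"
    unfolding countably_additive_def
  proof (intro allI impI)
    fix F :: "nat \<Rightarrow> 'a set"
    assume F: "range F \<subseteq> sets A" "disjoint_family F" "\<Union> (range F) \<in> sets A"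
    have FB: "range F \<subseteq> sets B" using F(1) assms by simp
    have "(\<Sum>i. emeasure A (F i) + emeasure B (F i)) = (\<Sum>i. emeasure A (F i)) + (\<Sum>i. emeasure B (F i))"
      by (rule suminf_add[OF summableI summableI, symmetric])
    also have "\<dots> = emeasure A (\<Union> (range F)) + emeasure B (\<Union> (range F))"
      using suminf_emeasure[OF F(1) F(2)] suminf_emeasure[OF FB F(2)] by simp
    finally show "(\<Sum>i. emeasure A (F i) + emeasure B (F i)) = emeasure A (\<Union> (range F)) + emeasure B (\<Union> (range F))" .
  qed
qed

lemma sets_madd[simp]: "sets (madd A B) = sets A"
  unfolding madd_def using sets.space_closed[of A] sets.sigma_sets_eq[of A] by simp

lemma space_madd[simp]: "space (madd A B) = space A"
  unfolding madd_def using sets.space_closed[of A] by simp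

lemma emeasure_madd:
  assumes "sets B = sets A" "S \<in> sets A"
  shows "emeasure (madd A B) S = emeasure A S + emeasure B S"
  unfolding madd_def
  using madd_ms[OF assms(1)] assms(2)
  by (intro emeasure_measure_of_sigma) (auto simp: measure_space_def)

lemma nn_integral_madd:
  assumes sB: "sets B = sets A" and f: "f \<in> borel_measurable A"
  shows "nn_integral (madd A B) f = nn_integral A f + nn_integral B f"
  using f
proof induction
  case (cong f g)
  note cg = cong
  have "nn_integral (madd A B) f = nn_integral (madd A B) g"
    using cong.hyps(3) by (intro nn_integral_cong) simp
  moreover have "nn_integral A f = nn_integral A g"
    using cong.hyps(3) by (intro nn_integral_cong) simp
  moreover have "nn_integral B f = nn_integral B g"
    using cong.hyps(3) sets_eq_imp_space_eq[OF sB] by (intro nn_integral_cong) simp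
  ultimately show ?case using cg by simp
next
  case (set A')
  then show ?case using emeasure_madd[OF sB] sB by simp
next
  case (mult f c)
  have fB: "f \<in> borel_measurable B" using mult measurable_cong_sets[OF sB, of "borel :: ennreal measure" "borel :: ennreal measure"] by simp
  have fM: "f \<in> borel_measurable (madd A B)" using mult measurable_cong_sets[of "madd A B" A "borel :: ennreal measure" "borel :: ennreal measure"] by simp
  show ?case using mult fB fM by (simp add: nn_integral_cmult distrib_left)
next
  case (add f g)
  have fB: "f \<in> borel_measurable B" "g \<in> borel_measurable B"
    using add measurable_cong_sets[OF sB, of "borel :: ennreal measure" "borel :: ennreal measure"] by simp+
  have fM: "f \<in> borel_measurable (madd A B)" "g \<in> borel_measurable (madd A B)"
    using add measurable_cong_sets[of "madd A B" A "borel :: ennreal measure" "borel :: ennreal measure"] by simp_all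
  show ?case using add fB fM by (simp add: nn_integral_add algebra_simps)
next
  case (seq U)
  have UB: "U i \<in> borel_measurable B" for i
    using seq measurable_cong_sets[OF sB, of "borel :: ennreal measure" "borel :: ennreal measure"] by simp
  have UM: "U i \<in> borel_measurable (madd A B)" for i
    using seq measurable_cong_sets[of "madd A B" A "borel :: ennreal measure" "borel :: ennreal measure"] by simp
  have iA: "incseq (\<lambda>i. nn_integral A (U i))"
    using seq.hyps(3) by (auto simp: incseq_def le_fun_def intro!: nn_integral_mono)
  have iB: "incseq (\<lambda>i. nn_integral B (U i))"
    using seq.hyps(3) by (auto simp: incseq_def le_fun_def intro!: nn_integral_mono)
  have SU: "Sup (range U) = (\<lambda>x. SUP i. U i x)" by (simp add: fun_eq_iff SUP_apply image_comp)
  have "nn_integral (madd A B) (Sup (range U)) = (SUP i. nn_integral (madd A B) (U i))"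
    unfolding SU by (rule nn_integral_monotone_convergence_SUP[OF seq.hyps(3) UM])
  also have "\<dots> = (SUP i. nn_integral A (U i) + nn_integral B (U i))"
    using seq.IH by simp
  also have "\<dots> = (SUP i. nn_integral A (U i)) + (SUP i. nn_integral B (U i))"
    by (rule ennreal_SUP_add[OF iA iB])
  also have "\<dots> = nn_integral A (Sup (range U)) + nn_integral B (Sup (range U))"
    unfolding SU
    using nn_integral_monotone_convergence_SUP[OF seq.hyps(3) seq.hyps(1)]
      nn_integral_monotone_convergence_SUP[OF seq.hyps(3) UB] by simp
  finally show ?case .
qed

lemma integrable_madd:
  fixes f :: "'b \<Rightarrow> real"
  assumes sB: "sets B = sets A" and iA: "integrable A f" and iB: "integrable B f"
  shows "integrable (madd A B) f"
proof -
  have fA: "f \<in> borel_measurable A" using iA by simp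
  have fM: "f \<in> borel_measurable (madd A B)" using fA measurable_cong_sets[of "madd A B" A "borel :: real measure" "borel :: real measure"] by simp
  have "nn_integral (madd A B) (\<lambda>x. ennreal (norm (f x))) = nn_integral A (\<lambda>x. ennreal (norm (f x))) + nn_integral B (\<lambda>x. ennreal (norm (f x)))"
    using fA by (intro nn_integral_madd[OF sB]) auto
  also have "\<dots> < \<infinity>" using iA iB unfolding integrable_iff_bounded by simp
  finally show ?thesis using fM unfolding integrable_iff_bounded by simp
qed

lemma integral_madd:
  fixes f :: "'b \<Rightarrow> real"
  assumes sB: "sets B = sets A" and iA: "integrable A f" and iB: "integrable B f"
  shows "integral\<^sup>L (madd A B) f = integral\<^sup>L A f + integral\<^sup>L B f"
proof -
  have fA: "f \<in> borel_measurable A" using iA by simp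
  have iM: "integrable (madd A B) f" by (rule integrable_madd[OF sB iA iB])
  have fin: "(\<integral>\<^sup>+x. ennreal (f x) \<partial>C) < \<infinity>" "(\<integral>\<^sup>+x. ennreal (- f x) \<partial>C) < \<infinity>" if "integrable C f" for C
  proof -
    have "(\<integral>\<^sup>+x. ennreal (f x) \<partial>C) \<le> (\<integral>\<^sup>+x. ennreal (norm (f x)) \<partial>C)"
      by (intro nn_integral_mono) auto
    also have "\<dots> < \<infinity>" using that unfolding integrable_iff_bounded by simp
    finally show "(\<integral>\<^sup>+x. ennreal (f x) \<partial>C) < \<infinity>" .
    have "(\<integral>\<^sup>+x. ennreal (- f x) \<partial>C) \<le> (\<integral>\<^sup>+x. ennreal (norm (f x)) \<partial>C)"
      by (intro nn_integral_mono) auto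
    also have "\<dots> < \<infinity>" using that unfolding integrable_iff_bounded by simp
    finally show "(\<integral>\<^sup>+x. ennreal (- f x) \<partial>C) < \<infinity>" .
  qed
  have p: "(\<integral>\<^sup>+x. ennreal (f x) \<partial>madd A B) = (\<integral>\<^sup>+x. ennreal (f x) \<partial>A) + (\<integral>\<^sup>+x. ennreal (f x) \<partial>B)"
    using fA by (intro nn_integral_madd[OF sB]) auto
  have n: "(\<integral>\<^sup>+x. ennreal (- f x) \<partial>madd A B) = (\<integral>\<^sup>+x. ennreal (- f x) \<partial>A) + (\<integral>\<^sup>+x. ennreal (- f x) \<partial>B)"
    using fA by (intro nn_integral_madd[OF sB]) auto
  show ?thesis
    unfolding real_lebesgue_integral_def[OF iM] real_lebesgue_integral_def[OF iA] real_lebesgue_integral_def[OF iB] p n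
    using fin[OF iA] fin[OF iB] by (simp add: enn2real_plus)
qed



lemma prod_int:
  fixes f g :: "real \<Rightarrow> real"
  assumes P1: "prob_space M1" and P2: "prob_space M2" and i1: "integrable M1 f" and i2: "integrable M2 g"
  shows "integrable (M1 \<Otimes>\<^sub>M M2) (\<lambda>z. f (fst z) * g (snd z)) \<and>
    integral\<^sup>L (M1 \<Otimes>\<^sub>M M2) (\<lambda>z. f (fst z) * g (snd z)) = integral\<^sup>L M1 f * integral\<^sup>L M2 g"
proof -
  interpret p: pair_sigma_finite M1 M2
    using P1 P2 by (simp add: pair_sigma_finite_def prob_space_imp_sigma_finite)
  have mf[measurable]: "f \<in> borel_measurable M1" using i1 by simp
  have mg[measurable]: "g \<in> borel_measurable M2" using i2 by simp
  have mh: "(\<lambda>z. f (fst z) * g (snd z)) \<in> borel_measurable (M1 \<Otimes>\<^sub>M M2)" by measurable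
  have "(\<integral>\<^sup>+z. ennreal (norm (f (fst z) * g (snd z))) \<partial>(M1 \<Otimes>\<^sub>M M2))
      = (\<integral>\<^sup>+x. \<integral>\<^sup>+y. ennreal (norm (f x)) * ennreal (norm (g y)) \<partial>M2 \<partial>M1)"
  proof -
    have "(\<integral>\<^sup>+x. \<integral>\<^sup>+y. ennreal (norm (f (fst (x,y)) * g (snd (x,y)))) \<partial>M2 \<partial>M1)
        = (\<integral>\<^sup>+z. ennreal (norm (f (fst z) * g (snd z))) \<partial>(M1 \<Otimes>\<^sub>M M2))"
      by (rule p.M2.nn_integral_fst) measurable
    then show ?thesis by (simp add: abs_mult ennreal_mult)
  qed
  also have "\<dots> = (\<integral>\<^sup>+x. ennreal (norm (f x)) * (\<integral>\<^sup>+y. ennreal (norm (g y)) \<partial>M2) \<partial>M1)"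
    by (simp add: nn_integral_cmult)
  also have "\<dots> = (\<integral>\<^sup>+x. ennreal (norm (f x)) \<partial>M1) * (\<integral>\<^sup>+y. ennreal (norm (g y)) \<partial>M2)"
    by (simp add: nn_integral_multc)
  also have "\<dots> < \<infinity>"
    using i1 i2 unfolding integrable_iff_bounded by (simp add: ennreal_mult_less_top)
  finally have int: "integrable (M1 \<Otimes>\<^sub>M M2) (\<lambda>z. f (fst z) * g (snd z))"
    using mh unfolding integrable_iff_bounded by simp
  have "integral\<^sup>L (M1 \<Otimes>\<^sub>M M2) (\<lambda>z. f (fst z) * g (snd z)) = (\<integral>x. (\<integral>y. f x * g y \<partial>M2) \<partial>M1)"
    using p.integral_fst'[OF int] by simp
  also have "\<dots> = (\<integral>x. f x * integral\<^sup>L M2 g \<partial>M1)" by simp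
  also have "\<dots> = integral\<^sup>L M1 f * integral\<^sup>L M2 g" by simp
  finally show ?thesis using int by simp
qed

lemma eucl_less_prod: "eucl_less (a :: real \<times> real) x \<longleftrightarrow> fst a < fst x \<and> snd a < snd x"
  by (auto simp: eucl_less_def Basis_prod_def inner_prod_def)

definition rays :: "(real \<times> real) set set" where
  "rays = range (\<lambda>a::real \<times> real. {x. eucl_less a x})"

lemma sets_borel_rays: "sets (borel :: (real \<times> real) measure) = sigma_sets UNIV rays"
proof -
  have "sets (borel :: (real \<times> real) measure) = sets (sigma UNIV rays)"
    unfolding rays_def by (subst borel_eq_greaterThan) simp
  also have "\<dots> = sigma_sets UNIV rays" by simp
  finally show ?thesis .
qed

lemma rays_Int_stable: "Int_stable rays"
  unfolding Int_stable_def rays_def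
proof (intro ballI)
  fix A B assume "A \<in> range (\<lambda>a::real \<times> real. {x. eucl_less a x})" "B \<in> range (\<lambda>a::real \<times> real. {x. eucl_less a x})"
  then obtain a b where ab: "A = {x. eucl_less a x}" "B = {x. eucl_less b x}" by auto
  have "A \<inter> B = {x. eucl_less (max (fst a) (fst b), max (snd a) (snd b)) x}"
    unfolding ab eucl_less_prod by auto
  then show "A \<inter> B \<in> range (\<lambda>a::real \<times> real. {x. eucl_less a x})" by blast
qed

lemma rays_cover: "(\<Union>i::nat. {x. eucl_less (- real i, - real i) x}) = (UNIV :: (real \<times> real) set)"
proof -
  have "x \<in> (\<Union>i::nat. {x. eucl_less (- real i, - real i) x})" for x :: "real \<times> real"
  proof -
    obtain n :: nat where "max (- fst x) (- snd x) < real n" using reals_Archimedean2 by blast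
    then show ?thesis by (intro UN_I[of n]) (auto simp: eucl_less_prod)
  qed
  then show ?thesis by auto
qed

lemma finite_measure_madd:
  assumes "finite_measure A" "finite_measure B" "sets B = sets A"
  shows "finite_measure (madd A B)"
proof (rule finite_measureI)
  have "emeasure (madd A B) (space (madd A B)) = emeasure A (space A) + emeasure B (space A)"
    using emeasure_madd[OF assms(3)] by simp
  also have "space A = space B" using sets_eq_imp_space_eq[OF assms(3)] by simp
  finally show "emeasure (madd A B) (space (madd A B)) \<noteq> \<infinity>"
    using assms(1,2) finite_measure.emeasure_finite[of A "space A"] finite_measure.emeasure_finite[of B "space B"]
    by (simp add: \<open>space A = space B\<close>)
qed

lemma finite_measure_dens:
  assumes "finite_measure A"
  shows "finite_measure (density A (\<lambda>_. ennreal c))"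
proof (rule finite_measureI)
  show "emeasure (density A (\<lambda>_. ennreal c)) (space (density A (\<lambda>_. ennreal c))) \<noteq> \<infinity>"
    using emeasure_density_const[of "space A" A "ennreal c"] finite_measure.emeasure_finite[OF assms, of "space A"]
    by (simp add: ennreal_mult_eq_top_iff)
qed

lemma measure_madd:
  assumes "finite_measure A" "finite_measure B" "sets B = sets A" "S \<in> sets A"
  shows "measure (madd A B) S = measure A S + measure B S"
proof -
  have "measure (madd A B) S = enn2real (emeasure A S + emeasure B S)"
    unfolding measure_def using emeasure_madd[OF assms(3,4)] by simp
  also have "\<dots> = measure A S + measure B S"
    unfolding measure_def
    using finite_measure.emeasure_finite[OF assms(1), of S] finite_measure.emeasure_finite[OF assms(2), of S]
    by (simp add: enn2real_plus top.not_eq_extremum)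
  finally show ?thesis .
qed



lemma dens_int:
  fixes f :: "'b \<Rightarrow> real"
  assumes i: "integrable C f" and c: "0 \<le> c"
  shows "integrable (density C (\<lambda>_. ennreal c)) f \<and> integral\<^sup>L (density C (\<lambda>_. ennreal c)) f = c * integral\<^sup>L C f"
proof -
  have mf: "f \<in> borel_measurable C" using i by simp
  have "integrable (density C (\<lambda>_. ennreal c)) f \<longleftrightarrow> integrable C (\<lambda>x. c *\<^sub>R f x)"
    by (rule integrable_density[OF mf]) (use c in auto)
  moreover have "integral\<^sup>L (density C (\<lambda>_. ennreal c)) f = integral\<^sup>L C (\<lambda>x. c *\<^sub>R f x)"
    by (rule integral_density[OF mf]) (use c in auto)
  ultimately show ?thesis using i by simp
qed

lemma madd_int:
  fixes f :: "'b \<Rightarrow> real"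
  assumes "sets B = sets A" "integrable A f" "integrable B f"
  shows "integrable (madd A B) f \<and> integral\<^sup>L (madd A B) f = integral\<^sup>L A f + integral\<^sup>L B f"
  using integrable_madd[OF assms] integral_madd[OF assms] by simp

lemma measure_dens:
  assumes "finite_measure C" "S \<in> sets C" "0 \<le> c"
  shows "measure (density C (\<lambda>_. ennreal c)) S = c * measure C S"
  using measure_density_const[OF assms(2), of "ennreal c"] assms(3) by simp

lemma meas_prod_rect:
  assumes "prob_space M1" "prob_space M2" "A \<in> sets M1" "B \<in> sets M2"
  shows "measure (M1 \<Otimes>\<^sub>M M2) (A \<times> B) = measure M1 A * measure M2 B"
proof -
  interpret M2: sigma_finite_measure M2 using assms(2) by (simp add: prob_space_imp_sigma_finite)
  have "emeasure (M1 \<Otimes>\<^sub>M M2) (A \<times> B) = emeasure M1 A * emeasure M2 B"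
    by (rule M2.emeasure_pair_measure_Times[OF assms(3,4)])
  then show ?thesis unfolding measure_def by (simp add: enn2real_mult)
qed

context prob_space
begin

lemma extension:
  fixes X Y :: "'a \<Rightarrow> real" and r :: real
  assumes mX[measurable]: "X \<in> borel_measurable M" and mY[measurable]: "Y \<in> borel_measurable M"
    and rect: "\<And>a b. prob {\<omega>\<in>space M. a < X \<omega> \<and> b < Y \<omega>} + prob {\<omega>\<in>space M. a < Y \<omega> \<and> b < X \<omega>}
          - prob {\<omega>\<in>space M. a < X \<omega>} * prob {\<omega>\<in>space M. b < Y \<omega>}
          - prob {\<omega>\<in>space M. a < Y \<omega>} * prob {\<omega>\<in>space M. b < X \<omega>}
          = r * (prob {\<omega>\<in>space M. a < X \<omega> \<and> b < X \<omega>} - prob {\<omega>\<in>space M. a < X \<omega>} * prob {\<omega>\<in>space M. b < X \<omega>}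
               + prob {\<omega>\<in>space M. a < Y \<omega> \<and> b < Y \<omega>} - prob {\<omega>\<in>space M. a < Y \<omega>} * prob {\<omega>\<in>space M. b < Y \<omega>})"
    and g[measurable]: "g \<in> borel_measurable borel" and sX: "sqi (\<lambda>\<omega>. g (X \<omega>))" and sY: "sqi (\<lambda>\<omega>. g (Y \<omega>))"
  shows "2 * Cv (\<lambda>\<omega>. g (X \<omega>)) (\<lambda>\<omega>. g (Y \<omega>)) =
    r * (Cv (\<lambda>\<omega>. g (X \<omega>)) (\<lambda>\<omega>. g (X \<omega>)) + Cv (\<lambda>\<omega>. g (Y \<omega>)) (\<lambda>\<omega>. g (Y \<omega>)))"
proof -
  define rp where "rp = max r 0"
  define rm where "rm = max (- r) 0"
  have rpm: "r = rp - rm" "0 \<le> rp" "0 \<le> rm" unfolding rp_def rm_def by auto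
  define DXY where "DXY = distr M borel (\<lambda>\<omega>. (X \<omega>, Y \<omega>))"
  define DYX where "DYX = distr M borel (\<lambda>\<omega>. (Y \<omega>, X \<omega>))"
  define DXX where "DXX = distr M borel (\<lambda>\<omega>. (X \<omega>, X \<omega>))"
  define DYY where "DYY = distr M borel (\<lambda>\<omega>. (Y \<omega>, Y \<omega>))"
  define mX where "mX = distr M borel X"
  define mY where "mY = distr M borel Y"
  define PXY where "PXY = mX \<Otimes>\<^sub>M mY"
  define PYX where "PYX = mY \<Otimes>\<^sub>M mX"
  define PXX where "PXX = mX \<Otimes>\<^sub>M mX"
  define PYY where "PYY = mY \<Otimes>\<^sub>M mY"
  define Pm where "Pm = madd (madd DXY DYX) (madd (density (madd DXX DYY) (\<lambda>_. ennreal rm)) (density (madd PXX PYY) (\<lambda>_. ennreal rp)))"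
  define Nm where "Nm = madd (madd PXY PYX) (madd (density (madd DXX DYY) (\<lambda>_. ennreal rp)) (density (madd PXX PYY) (\<lambda>_. ennreal rm)))"
  have pmX: "prob_space mX" "prob_space mY" unfolding mX_def mY_def by (auto intro!: prob_space_distr)
  have pD: "prob_space DXY" "prob_space DYX" "prob_space DXX" "prob_space DYY"
    unfolding DXY_def DYX_def DXX_def DYY_def by (auto intro!: prob_space_distr)
  have pP: "prob_space PXY" "prob_space PYX" "prob_space PXX" "prob_space PYY"
    unfolding PXY_def PYX_def PXX_def PYY_def using pmX by (auto intro!: prob_space_pair)
  have smX: "sets mX = sets borel" "sets mY = sets borel" unfolding mX_def mY_def by simp_all
  have sP: "sets PXY = sets borel" "sets PYX = sets borel" "sets PXX = sets borel" "sets PYY = sets borel"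
  proof -
    have "sets (mX \<Otimes>\<^sub>M mY) = sets (borel \<Otimes>\<^sub>M (borel :: real measure))"
      "sets (mY \<Otimes>\<^sub>M mX) = sets (borel \<Otimes>\<^sub>M (borel :: real measure))"
      "sets (mX \<Otimes>\<^sub>M mX) = sets (borel \<Otimes>\<^sub>M (borel :: real measure))"
      "sets (mY \<Otimes>\<^sub>M mY) = sets (borel \<Otimes>\<^sub>M (borel :: real measure))"
      using smX by (auto intro!: sets_pair_measure_cong)
    then show "sets PXY = sets borel" "sets PYX = sets borel" "sets PXX = sets borel" "sets PYY = sets borel"
      unfolding PXY_def PYX_def PXX_def PYY_def borel_prod by simp_all
  qed
  have sD: "sets DXY = sets borel" "sets DYX = sets borel" "sets DXX = sets borel" "sets DYY = sets borel"
    unfolding DXY_def DYX_def DXX_def DYY_def by simp_all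
  have fD: "finite_measure DXY" "finite_measure DYX" "finite_measure DXX" "finite_measure DYY"
    using pD by (auto simp: prob_space_def)
  have fP: "finite_measure PXY" "finite_measure PYX" "finite_measure PXX" "finite_measure PYY"
    using pP by (auto simp: prob_space_def)
  have sDD: "sets (density (madd DXX DYY) (\<lambda>_. ennreal c)) = sets borel" for c using sD by simp
  have sPP: "sets (density (madd PXX PYY) (\<lambda>_. ennreal c)) = sets borel" for c using sP by simp
  have fDD: "finite_measure (density (madd DXX DYY) (\<lambda>_. ennreal c))" for c
    by (intro finite_measure_dens finite_measure_madd fD) (simp add: sD)
  have fPP: "finite_measure (density (madd PXX PYY) (\<lambda>_. ennreal c))" for c
    by (intro finite_measure_dens finite_measure_madd fP) (simp add: sP)
  have fPm: "finite_measure Pm" unfolding Pm_def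
    by (intro finite_measure_madd fD fDD fPP) (simp_all add: sD sP sDD sPP)
  have fNm: "finite_measure Nm" unfolding Nm_def
    by (intro finite_measure_madd fP fDD fPP) (simp_all add: sD sP sDD sPP)
  let ?pX = "\<lambda>t. prob {\<omega>\<in>space M. t < X \<omega>}" and ?pY = "\<lambda>t. prob {\<omega>\<in>space M. t < Y \<omega>}"
  have mD: "measure (distr M borel (\<lambda>\<omega>. (Z1 \<omega>, Z2 \<omega>))) ({a<..} \<times> {b<..}) = prob {\<omega>\<in>space M. a < Z1 \<omega> \<and> b < Z2 \<omega>}"
    if [measurable]: "Z1 \<in> borel_measurable M" "Z2 \<in> borel_measurable M" for Z1 Z2 :: "'a \<Rightarrow> real" and a b :: real
  proof -
    have "{a<..} \<times> {b<..} \<in> sets (borel :: (real \<times> real) measure)" by (intro borel_open open_Times) auto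
    then have "measure (distr M borel (\<lambda>\<omega>. (Z1 \<omega>, Z2 \<omega>))) ({a<..} \<times> {b<..}) =
        measure M ((\<lambda>\<omega>. (Z1 \<omega>, Z2 \<omega>)) -` ({a<..} \<times> {b<..}) \<inter> space M)"
      by (intro measure_distr) auto
    also have "(\<lambda>\<omega>. (Z1 \<omega>, Z2 \<omega>)) -` ({a<..} \<times> {b<..}) \<inter> space M = {\<omega>\<in>space M. a < Z1 \<omega> \<and> b < Z2 \<omega>}" by auto
    finally show ?thesis .
  qed
  have mM: "measure (distr M borel Z) {a<..} = prob {\<omega>\<in>space M. a < Z \<omega>}"
    if [measurable]: "Z \<in> borel_measurable M" for Z :: "'a \<Rightarrow> real" and a :: real
  proof -
    have "measure (distr M borel Z) {a<..} = measure M (Z -` {a<..} \<inter> space M)"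
      by (intro measure_distr) auto
    also have "Z -` {a<..} \<inter> space M = {\<omega>\<in>space M. a < Z \<omega>}" by auto
    finally show ?thesis .
  qed
  have Rsets: "{a<..} \<times> {b<..} \<in> sets (borel :: (real \<times> real) measure)" for a b :: real
    by (intro borel_open open_Times) auto
  have mP: "measure PXY ({a<..} \<times> {b<..}) = ?pX a * ?pY b" "measure PYX ({a<..} \<times> {b<..}) = ?pY a * ?pX b"
    "measure PXX ({a<..} \<times> {b<..}) = ?pX a * ?pX b" "measure PYY ({a<..} \<times> {b<..}) = ?pY a * ?pY b" for a b
    unfolding PXY_def PYX_def PXX_def PYY_def
    using meas_prod_rect[OF pmX(1) pmX(2)] meas_prod_rect[OF pmX(2) pmX(1)]
      meas_prod_rect[OF pmX(1) pmX(1)] meas_prod_rect[OF pmX(2) pmX(2)]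
    by (simp_all add: smX mM mX_def mY_def)
  have vD: "measure DXY ({a<..} \<times> {b<..}) = prob {\<omega>\<in>space M. a < X \<omega> \<and> b < Y \<omega>}"
    "measure DYX ({a<..} \<times> {b<..}) = prob {\<omega>\<in>space M. a < Y \<omega> \<and> b < X \<omega>}"
    "measure DXX ({a<..} \<times> {b<..}) = prob {\<omega>\<in>space M. a < X \<omega> \<and> b < X \<omega>}"
    "measure DYY ({a<..} \<times> {b<..}) = prob {\<omega>\<in>space M. a < Y \<omega> \<and> b < Y \<omega>}" for a b
    unfolding DXY_def DYX_def DXX_def DYY_def by (simp_all add: mD)
  have measP: "measure Pm ({a<..} \<times> {b<..}) =
      prob {\<omega>\<in>space M. a < X \<omega> \<and> b < Y \<omega>} + prob {\<omega>\<in>space M. a < Y \<omega> \<and> b < X \<omega>}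
      + (rm * (prob {\<omega>\<in>space M. a < X \<omega> \<and> b < X \<omega>} + prob {\<omega>\<in>space M. a < Y \<omega> \<and> b < Y \<omega>})
      + rp * (?pX a * ?pX b + ?pY a * ?pY b))" for a b
  proof -
    have R: "{a<..} \<times> {b<..} \<in> sets borel" by (rule Rsets)
    have "measure Pm ({a<..} \<times> {b<..}) = measure DXY ({a<..} \<times> {b<..}) + measure DYX ({a<..} \<times> {b<..})
       + (rm * (measure DXX ({a<..} \<times> {b<..}) + measure DYY ({a<..} \<times> {b<..}))
        + rp * (measure PXX ({a<..} \<times> {b<..}) + measure PYY ({a<..} \<times> {b<..})))"
      unfolding Pm_def using R
      by (simp add: measure_madd finite_measure_madd finite_measure_dens measure_dens fD fP sD sP rpm)
    then show ?thesis by (simp add: vD mP)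
  qed
  have measN: "measure Nm ({a<..} \<times> {b<..}) =
      ?pX a * ?pY b + ?pY a * ?pX b
      + (rp * (prob {\<omega>\<in>space M. a < X \<omega> \<and> b < X \<omega>} + prob {\<omega>\<in>space M. a < Y \<omega> \<and> b < Y \<omega>})
      + rm * (?pX a * ?pX b + ?pY a * ?pY b))" for a b
  proof -
    have R: "{a<..} \<times> {b<..} \<in> sets borel" by (rule Rsets)
    have "measure Nm ({a<..} \<times> {b<..}) = measure PXY ({a<..} \<times> {b<..}) + measure PYX ({a<..} \<times> {b<..})
       + (rp * (measure DXX ({a<..} \<times> {b<..}) + measure DYY ({a<..} \<times> {b<..}))
        + rm * (measure PXX ({a<..} \<times> {b<..}) + measure PYY ({a<..} \<times> {b<..})))"
      unfolding Nm_def using R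
      by (simp add: measure_madd finite_measure_madd finite_measure_dens measure_dens fD fP sD sP rpm)
    then show ?thesis by (simp add: vD mP)
  qed
  have PN: "Pm = Nm"
  proof (rule measure_eqI_generator_eq[where \<Omega>=UNIV and E=rays and A="\<lambda>i::nat. {x. eucl_less (- real i, - real i) x}"])
    show "Int_stable rays" by (rule rays_Int_stable)
    show "rays \<subseteq> Pow UNIV" by simp
    show "sets Pm = sigma_sets UNIV rays" unfolding Pm_def using sD sets_borel_rays by simp
    show "sets Nm = sigma_sets UNIV rays" unfolding Nm_def using sP sets_borel_rays by simp
    show "range (\<lambda>i::nat. {x. eucl_less (- real i, - real i) x}) \<subseteq> rays" unfolding rays_def by auto
    show "(\<Union>i::nat. {x. eucl_less (- real i, - real i) x}) = UNIV" by (rule rays_cover)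
    show "emeasure Pm {x. eucl_less (- real i, - real i) x} \<noteq> \<infinity>" for i
      using finite_measure.emeasure_finite[OF fPm] by simp
    fix R assume "R \<in> rays"
    then obtain a where "R = {x. eucl_less a x}" unfolding rays_def by auto
    then have R: "R = {fst a<..} \<times> {snd a<..}" unfolding eucl_less_prod by auto
    have "measure Pm R = measure Nm R"
      unfolding R measP measN using rect[of "fst a" "snd a"] unfolding rpm(1)
      by (simp add: algebra_simps)
    then show "emeasure Pm R = emeasure Nm R"
      using finite_measure.emeasure_eq_measure[OF fPm] finite_measure.emeasure_eq_measure[OF fNm] by simp
  qed
  define f where "f = (\<lambda>z::real \<times> real. g (fst z) * g (snd z))"
  have mf[measurable]: "f \<in> borel_measurable borel" unfolding f_def borel_prod[symmetric] by measurable
  let ?EXY = "expectation (\<lambda>\<omega>. g (X \<omega>) * g (Y \<omega>))"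
  let ?EYX = "expectation (\<lambda>\<omega>. g (Y \<omega>) * g (X \<omega>))"
  let ?EXX = "expectation (\<lambda>\<omega>. g (X \<omega>) * g (X \<omega>))"
  let ?EYY = "expectation (\<lambda>\<omega>. g (Y \<omega>) * g (Y \<omega>))"
  let ?EX = "expectation (\<lambda>\<omega>. g (X \<omega>))" and ?EY = "expectation (\<lambda>\<omega>. g (Y \<omega>))"
  have iP: "integrable M (\<lambda>\<omega>. g (X \<omega>) * g (Y \<omega>))" "integrable M (\<lambda>\<omega>. g (Y \<omega>) * g (X \<omega>))"
    "integrable M (\<lambda>\<omega>. g (X \<omega>) * g (X \<omega>))" "integrable M (\<lambda>\<omega>. g (Y \<omega>) * g (Y \<omega>))"
    using sqi_mult sX sY by auto
  have intD: "integrable (distr M borel (\<lambda>\<omega>. (Z1 \<omega>, Z2 \<omega>))) f \<and>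
      integral\<^sup>L (distr M borel (\<lambda>\<omega>. (Z1 \<omega>, Z2 \<omega>))) f = expectation (\<lambda>\<omega>. g (Z1 \<omega>) * g (Z2 \<omega>))"
    if [measurable]: "Z1 \<in> borel_measurable M" "Z2 \<in> borel_measurable M"
      and i: "integrable M (\<lambda>\<omega>. g (Z1 \<omega>) * g (Z2 \<omega>))" for Z1 Z2 :: "'a \<Rightarrow> real"
  proof
    show "integrable (distr M borel (\<lambda>\<omega>. (Z1 \<omega>, Z2 \<omega>))) f"
      by (subst integrable_distr_eq) (use i mf in \<open>auto simp: f_def\<close>)
    show "integral\<^sup>L (distr M borel (\<lambda>\<omega>. (Z1 \<omega>, Z2 \<omega>))) f = expectation (\<lambda>\<omega>. g (Z1 \<omega>) * g (Z2 \<omega>))"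
      by (subst integral_distr) (use mf in \<open>auto simp: f_def\<close>)
  qed
  have iDXY: "integrable DXY f \<and> integral\<^sup>L DXY f = ?EXY" unfolding DXY_def by (rule intD) (use iP in auto)
  have iDYX: "integrable DYX f \<and> integral\<^sup>L DYX f = ?EYX" unfolding DYX_def by (rule intD) (use iP in auto)
  have iDXX: "integrable DXX f \<and> integral\<^sup>L DXX f = ?EXX" unfolding DXX_def by (rule intD) (use iP in auto)
  have iDYY: "integrable DYY f \<and> integral\<^sup>L DYY f = ?EYY" unfolding DYY_def by (rule intD) (use iP in auto)
  have imX: "integrable mX g \<and> integral\<^sup>L mX g = ?EX"
  proof
    show "integrable mX g" unfolding mX_def by (subst integrable_distr_eq) (use sqi_int[OF sX] in auto)
    show "integral\<^sup>L mX g = ?EX" unfolding mX_def by (subst integral_distr) auto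
  qed
  have imY: "integrable mY g \<and> integral\<^sup>L mY g = ?EY"
  proof
    show "integrable mY g" unfolding mY_def by (subst integrable_distr_eq) (use sqi_int[OF sY] in auto)
    show "integral\<^sup>L mY g = ?EY" unfolding mY_def by (subst integral_distr) auto
  qed
  have iPXY: "integrable PXY f \<and> integral\<^sup>L PXY f = ?EX * ?EY"
    using prod_int[OF pmX(1) pmX(2), of g g] imX imY unfolding PXY_def f_def by simp
  have iPYX: "integrable PYX f \<and> integral\<^sup>L PYX f = ?EY * ?EX"
    using prod_int[OF pmX(2) pmX(1), of g g] imX imY unfolding PYX_def f_def by simp
  have iPXX: "integrable PXX f \<and> integral\<^sup>L PXX f = ?EX * ?EX"
    using prod_int[OF pmX(1) pmX(1), of g g] imX unfolding PXX_def f_def by simp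
  have iPYY: "integrable PYY f \<and> integral\<^sup>L PYY f = ?EY * ?EY"
    using prod_int[OF pmX(2) pmX(2), of g g] imY unfolding PYY_def f_def by simp
  have iDD: "integrable (madd DXX DYY) f \<and> integral\<^sup>L (madd DXX DYY) f = ?EXX + ?EYY"
    using madd_int[of DYY DXX f] iDXX iDYY sD by simp
  have iPP: "integrable (madd PXX PYY) f \<and> integral\<^sup>L (madd PXX PYY) f = ?EX * ?EX + ?EY * ?EY"
    using madd_int[of PYY PXX f] iPXX iPYY sP by simp
  have iD1: "integrable (madd DXY DYX) f \<and> integral\<^sup>L (madd DXY DYX) f = ?EXY + ?EYX"
    using madd_int[of DYX DXY f] iDXY iDYX sD by simp
  have iP1: "integrable (madd PXY PYX) f \<and> integral\<^sup>L (madd PXY PYX) f = ?EX * ?EY + ?EY * ?EX"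
    using madd_int[of PYX PXY f] iPXY iPYX sP by simp
  have dDD: "integrable (density (madd DXX DYY) (\<lambda>_. ennreal c)) f \<and>
     integral\<^sup>L (density (madd DXX DYY) (\<lambda>_. ennreal c)) f = c * (?EXX + ?EYY)" if "0 \<le> c" for c
    using dens_int[OF conjunct1[OF iDD] that] iDD by simp
  have dPP: "integrable (density (madd PXX PYY) (\<lambda>_. ennreal c)) f \<and>
     integral\<^sup>L (density (madd PXX PYY) (\<lambda>_. ennreal c)) f = c * (?EX * ?EX + ?EY * ?EY)" if "0 \<le> c" for c
    using dens_int[OF conjunct1[OF iPP] that] iPP by simp
  have sDP: "sets (density (madd PXX PYY) (\<lambda>_. ennreal c)) = sets (density (madd DXX DYY) (\<lambda>_. ennreal c'))" for c c'
    using sD sP by simp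
  have IP: "integral\<^sup>L Pm f = (?EXY + ?EYX) + (rm * (?EXX + ?EYY) + rp * (?EX * ?EX + ?EY * ?EY))"
  proof -
    have a: "integrable (madd (density (madd DXX DYY) (\<lambda>_. ennreal rm)) (density (madd PXX PYY) (\<lambda>_. ennreal rp))) f \<and>
        integral\<^sup>L (madd (density (madd DXX DYY) (\<lambda>_. ennreal rm)) (density (madd PXX PYY) (\<lambda>_. ennreal rp))) f
        = rm * (?EXX + ?EYY) + rp * (?EX * ?EX + ?EY * ?EY)"
      using madd_int[OF sDP conjunct1[OF dDD[OF rpm(3)]] conjunct1[OF dPP[OF rpm(2)]]] dDD[OF rpm(3)] dPP[OF rpm(2)] by simp
    have "sets (madd (density (madd DXX DYY) (\<lambda>_. ennreal rm)) (density (madd PXX PYY) (\<lambda>_. ennreal rp))) = sets (madd DXY DYX)"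
      using sD by simp
    then show ?thesis unfolding Pm_def using madd_int[OF _ conjunct1[OF iD1] conjunct1[OF a]] iD1 a by simp
  qed
  have IN: "integral\<^sup>L Nm f = (?EX * ?EY + ?EY * ?EX) + (rp * (?EXX + ?EYY) + rm * (?EX * ?EX + ?EY * ?EY))"
  proof -
    have a: "integrable (madd (density (madd DXX DYY) (\<lambda>_. ennreal rp)) (density (madd PXX PYY) (\<lambda>_. ennreal rm))) f \<and>
        integral\<^sup>L (madd (density (madd DXX DYY) (\<lambda>_. ennreal rp)) (density (madd PXX PYY) (\<lambda>_. ennreal rm))) f
        = rp * (?EXX + ?EYY) + rm * (?EX * ?EX + ?EY * ?EY)"
      using madd_int[OF sDP conjunct1[OF dDD[OF rpm(2)]] conjunct1[OF dPP[OF rpm(3)]]] dDD[OF rpm(2)] dPP[OF rpm(3)] by simp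
    have "sets (madd (density (madd DXX DYY) (\<lambda>_. ennreal rp)) (density (madd PXX PYY) (\<lambda>_. ennreal rm))) = sets (madd PXY PYX)"
      using sD sP by simp
    then show ?thesis unfolding Nm_def using madd_int[OF _ conjunct1[OF iP1] conjunct1[OF a]] iP1 a by simp
  qed
  have EYX: "?EYX = ?EXY" by (simp add: mult.commute)
  have "(?EXY + ?EYX) + (rm * (?EXX + ?EYY) + rp * (?EX * ?EX + ?EY * ?EY)) =
        (?EX * ?EY + ?EY * ?EX) + (rp * (?EXX + ?EYY) + rm * (?EX * ?EX + ?EY * ?EY))"
    using IP IN PN by simp
  then show ?thesis unfolding Cv_def EYX rpm(1) by (simp add: algebra_simps)
qed

end


context prob_space
begin

lemma same_distr_exp:
  fixes X Y :: "'a \<Rightarrow> real"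
  assumes [measurable]: "X \<in> borel_measurable M" "Y \<in> borel_measurable M"
    and eq: "distr M borel X = distr M borel Y" and h[measurable]: "h \<in> borel_measurable borel"
  shows "expectation (\<lambda>\<omega>. h (X \<omega>)) = expectation (\<lambda>\<omega>. (h (Y \<omega>) :: real))"
proof -
  have "expectation (\<lambda>\<omega>. h (X \<omega>)) = integral\<^sup>L (distr M borel X) h" by (subst integral_distr) auto
  also have "\<dots> = integral\<^sup>L (distr M borel Y) h" using eq by simp
  also have "\<dots> = expectation (\<lambda>\<omega>. h (Y \<omega>))" by (subst integral_distr) auto
  finally show ?thesis .
qed

lemma same_distr_var:
  fixes X Y :: "'a \<Rightarrow> real"
  assumes [measurable]: "X \<in> borel_measurable M" "Y \<in> borel_measurable M"
    and eq: "distr M borel X = distr M borel Y" and h[measurable]: "h \<in> borel_measurable borel"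
  shows "Cv (\<lambda>\<omega>. h (X \<omega>)) (\<lambda>\<omega>. h (X \<omega>)) = Cv (\<lambda>\<omega>. h (Y \<omega>)) (\<lambda>\<omega>. h (Y \<omega>))"
proof -
  have hh[measurable]: "(\<lambda>x. h x * h x) \<in> borel_measurable borel" by measurable
  show ?thesis unfolding Cv_def
    using same_distr_exp[OF assms(1,2) eq h] same_distr_exp[OF assms(1,2) eq hh] by simp
qed

lemma rect_from_Q:
  fixes X Y :: "'a \<Rightarrow> real"
  assumes mX[measurable]: "X \<in> borel_measurable M" and mY[measurable]: "Y \<in> borel_measurable M"
    and Q: "\<And>h. mono h \<Longrightarrow> sqi (\<lambda>\<omega>. h (X \<omega>)) \<Longrightarrow> sqi (\<lambda>\<omega>. h (Y \<omega>)) \<Longrightarrow>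
      2 * Cv (\<lambda>\<omega>. h (X \<omega>)) (\<lambda>\<omega>. h (Y \<omega>)) = r * (Cv (\<lambda>\<omega>. h (X \<omega>)) (\<lambda>\<omega>. h (X \<omega>)) + Cv (\<lambda>\<omega>. h (Y \<omega>)) (\<lambda>\<omega>. h (Y \<omega>)))"
  shows "prob {\<omega>\<in>space M. a < X \<omega> \<and> b < Y \<omega>} + prob {\<omega>\<in>space M. a < Y \<omega> \<and> b < X \<omega>}
          - prob {\<omega>\<in>space M. a < X \<omega>} * prob {\<omega>\<in>space M. b < Y \<omega>}
          - prob {\<omega>\<in>space M. a < Y \<omega>} * prob {\<omega>\<in>space M. b < X \<omega>}
          = r * (prob {\<omega>\<in>space M. a < X \<omega> \<and> b < X \<omega>} - prob {\<omega>\<in>space M. a < X \<omega>} * prob {\<omega>\<in>space M. b < X \<omega>}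
               + prob {\<omega>\<in>space M. a < Y \<omega> \<and> b < Y \<omega>} - prob {\<omega>\<in>space M. a < Y \<omega>} * prob {\<omega>\<in>space M. b < Y \<omega>})"
proof -
  let ?aX = "\<lambda>\<omega>. indicator {a<..} (X \<omega>) :: real" and ?bX = "\<lambda>\<omega>. indicator {b<..} (X \<omega>) :: real"
  let ?aY = "\<lambda>\<omega>. indicator {a<..} (Y \<omega>) :: real" and ?bY = "\<lambda>\<omega>. indicator {b<..} (Y \<omega>) :: real"
  have s: "sqi ?aX" "sqi ?bX" "sqi ?aY" "sqi ?bY" using sqi_ind mX mY by auto
  have mab: "mono (\<lambda>x. indicator {a<..} x + indicator {b<..} x :: real)"
    using mono_ind[of a] mono_ind[of b] unfolding mono_def by (simp add: add_mono)
  have sab: "sqi (\<lambda>\<omega>. indicator {a<..} (X \<omega>) + indicator {b<..} (X \<omega>) :: real)"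
    "sqi (\<lambda>\<omega>. indicator {a<..} (Y \<omega>) + indicator {b<..} (Y \<omega>) :: real)"
    using sqi_add s by auto
  have Qa: "2 * Cv ?aX ?aY = r * (Cv ?aX ?aX + Cv ?aY ?aY)" by (rule Q[OF mono_ind s(1) s(3)])
  have Qb: "2 * Cv ?bX ?bY = r * (Cv ?bX ?bX + Cv ?bY ?bY)" by (rule Q[OF mono_ind s(2) s(4)])
  have Qab: "2 * Cv (\<lambda>\<omega>. ?aX \<omega> + ?bX \<omega>) (\<lambda>\<omega>. ?aY \<omega> + ?bY \<omega>) =
     r * (Cv (\<lambda>\<omega>. ?aX \<omega> + ?bX \<omega>) (\<lambda>\<omega>. ?aX \<omega> + ?bX \<omega>) + Cv (\<lambda>\<omega>. ?aY \<omega> + ?bY \<omega>) (\<lambda>\<omega>. ?aY \<omega> + ?bY \<omega>))"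
    using Q[OF mab sab] by simp
  have e1: "Cv (\<lambda>\<omega>. ?aX \<omega> + ?bX \<omega>) (\<lambda>\<omega>. ?aY \<omega> + ?bY \<omega>) = Cv ?aX ?aY + Cv ?aX ?bY + Cv ?bX ?aY + Cv ?bX ?bY"
    using Cv_lin[OF s(1) s(2) s(3) s(4), of 1 1 1 1] by simp
  have e2: "Cv (\<lambda>\<omega>. ?aX \<omega> + ?bX \<omega>) (\<lambda>\<omega>. ?aX \<omega> + ?bX \<omega>) = Cv ?aX ?aX + 2 * Cv ?aX ?bX + Cv ?bX ?bX"
    using Cv_lin[OF s(1) s(2) s(1) s(2), of 1 1 1 1] Cv_sym[of ?bX ?aX] by simp
  have e3: "Cv (\<lambda>\<omega>. ?aY \<omega> + ?bY \<omega>) (\<lambda>\<omega>. ?aY \<omega> + ?bY \<omega>) = Cv ?aY ?aY + 2 * Cv ?aY ?bY + Cv ?bY ?bY"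
    using Cv_lin[OF s(3) s(4) s(3) s(4), of 1 1 1 1] Cv_sym[of ?bY ?aY] by simp
  have key: "Cv ?aX ?bY + Cv ?bX ?aY = r * (Cv ?aX ?bX + Cv ?aY ?bY)"
    using Qa Qb Qab unfolding e1 e2 e3 by (simp add: algebra_simps)
  have set_eq: "{\<omega>\<in>space M. b < X \<omega> \<and> a < Y \<omega>} = {\<omega>\<in>space M. a < Y \<omega> \<and> b < X \<omega>}" by auto
  show ?thesis
    using key unfolding Cv_ind[OF mX mY] Cv_ind[OF mX mX] Cv_ind[OF mY mY] set_eq
    by (simp add: algebra_simps)
qed

lemma IC_from_mono:
  fixes X Y :: "'a \<Rightarrow> real"
  assumes icm: "IC_mono M r X Y" and LX: "L2 M X" and LY: "L2 M Y"
    and cs: "r = 0 \<or> distr M borel X = distr M borel Y"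
  shows "IC M r X Y"
proof -
  have mX[measurable]: "X \<in> borel_measurable M" and mY[measurable]: "Y \<in> borel_measurable M"
    using LX LY unfolding L2_def by auto
  have Q: "2 * Cv (\<lambda>\<omega>. h (X \<omega>)) (\<lambda>\<omega>. h (Y \<omega>)) = r * (Cv (\<lambda>\<omega>. h (X \<omega>)) (\<lambda>\<omega>. h (X \<omega>)) + Cv (\<lambda>\<omega>. h (Y \<omega>)) (\<lambda>\<omega>. h (Y \<omega>)))"
    if h: "mono h" and sX: "sqi (\<lambda>\<omega>. h (X \<omega>))" and sY: "sqi (\<lambda>\<omega>. h (Y \<omega>))" for h
  proof -
    have A: "Cv (\<lambda>\<omega>. h (X \<omega>)) (\<lambda>\<omega>. h (Y \<omega>)) = r * sqrt (Cv (\<lambda>\<omega>. h (X \<omega>)) (\<lambda>\<omega>. h (X \<omega>)) * Cv (\<lambda>\<omega>. h (Y \<omega>)) (\<lambda>\<omega>. h (Y \<omega>)))"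
      by (rule lemmaA[OF icm LX LY h sX sY])
    show ?thesis
    proof (cases "r = 0")
      case True then show ?thesis using A by simp
    next
      case False
      then have eq: "distr M borel X = distr M borel Y" using cs by simp
      have hb: "h \<in> borel_measurable borel" by (rule borel_measurable_mono[OF h])
      have V: "Cv (\<lambda>\<omega>. h (X \<omega>)) (\<lambda>\<omega>. h (X \<omega>)) = Cv (\<lambda>\<omega>. h (Y \<omega>)) (\<lambda>\<omega>. h (Y \<omega>))"
        by (rule same_distr_var[OF mX mY eq hb])
      have nn: "0 \<le> Cv (\<lambda>\<omega>. h (Y \<omega>)) (\<lambda>\<omega>. h (Y \<omega>))" by (rule Cv_nonneg[OF sY])
      show ?thesis using A unfolding V using nn by simp
    qed
  qed
  have rect: "prob {\<omega>\<in>space M. a < X \<omega> \<and> b < Y \<omega>} + prob {\<omega>\<in>space M. a < Y \<omega> \<and> b < X \<omega>}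
          - prob {\<omega>\<in>space M. a < X \<omega>} * prob {\<omega>\<in>space M. b < Y \<omega>}
          - prob {\<omega>\<in>space M. a < Y \<omega>} * prob {\<omega>\<in>space M. b < X \<omega>}
          = r * (prob {\<omega>\<in>space M. a < X \<omega> \<and> b < X \<omega>} - prob {\<omega>\<in>space M. a < X \<omega>} * prob {\<omega>\<in>space M. b < X \<omega>}
               + prob {\<omega>\<in>space M. a < Y \<omega> \<and> b < Y \<omega>} - prob {\<omega>\<in>space M. a < Y \<omega>} * prob {\<omega>\<in>space M. b < Y \<omega>})" for a b
    by (rule rect_from_Q[OF mX mY Q])
  show ?thesis unfolding IC_def
  proof (intro conjI allI impI)
    show "corr M X Y = r" using icm unfolding IC_mono_def by simp
    fix g assume adm: "admissible M g X Y"
    have gb[measurable]: "g \<in> borel_measurable borel" using adm unfolding admissible_def by simp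
    have LgX: "L2 M (\<lambda>\<omega>. g (X \<omega>))" and LgY: "L2 M (\<lambda>\<omega>. g (Y \<omega>))"
      using adm unfolding admissible_def by (simp_all add: comp_def)
    have sX: "sqi (\<lambda>\<omega>. g (X \<omega>))" and sY: "sqi (\<lambda>\<omega>. g (Y \<omega>))" using LgX LgY L2_sqi by auto
    have pX: "0 < Cv (\<lambda>\<omega>. g (X \<omega>)) (\<lambda>\<omega>. g (X \<omega>))"
      using Cv_pos[OF sX] LgX unfolding L2_def by simp
    have pY: "0 < Cv (\<lambda>\<omega>. g (Y \<omega>)) (\<lambda>\<omega>. g (Y \<omega>))"
      using Cv_pos[OF sY] LgY unfolding L2_def by simp
    have E: "2 * Cv (\<lambda>\<omega>. g (X \<omega>)) (\<lambda>\<omega>. g (Y \<omega>)) =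
      r * (Cv (\<lambda>\<omega>. g (X \<omega>)) (\<lambda>\<omega>. g (X \<omega>)) + Cv (\<lambda>\<omega>. g (Y \<omega>)) (\<lambda>\<omega>. g (Y \<omega>)))"
      by (rule extension[OF mX mY rect gb sX sY])
    have c: "corr M (g \<circ> X) (g \<circ> Y) = Cv (\<lambda>\<omega>. g (X \<omega>)) (\<lambda>\<omega>. g (Y \<omega>)) /
        sqrt (Cv (\<lambda>\<omega>. g (X \<omega>)) (\<lambda>\<omega>. g (X \<omega>)) * Cv (\<lambda>\<omega>. g (Y \<omega>)) (\<lambda>\<omega>. g (Y \<omega>)))"
      using corr_Cv[OF sX sY pX pY] by (simp add: comp_def)
    show "corr M (g \<circ> X) (g \<circ> Y) = r"
    proof (cases "r = 0")
      case True
      then show ?thesis using c E by simp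
    next
      case False
      then have eq: "distr M borel X = distr M borel Y" using cs by simp
      have V: "Cv (\<lambda>\<omega>. g (X \<omega>)) (\<lambda>\<omega>. g (X \<omega>)) = Cv (\<lambda>\<omega>. g (Y \<omega>)) (\<lambda>\<omega>. g (Y \<omega>))"
        by (rule same_distr_var[OF mX mY eq gb])
      have sq: "sqrt (Cv (\<lambda>\<omega>. g (Y \<omega>)) (\<lambda>\<omega>. g (Y \<omega>)) * Cv (\<lambda>\<omega>. g (Y \<omega>)) (\<lambda>\<omega>. g (Y \<omega>))) =
         Cv (\<lambda>\<omega>. g (Y \<omega>)) (\<lambda>\<omega>. g (Y \<omega>))" using pY by simp
      show ?thesis using c E pY unfolding V sq by (simp add: field_simps)
    qed
  qed
qed

end

theorem theorem5:
  fixes M :: "'a measure" and X Y :: "'a \<Rightarrow> real" and r :: real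
  assumes "prob_space M" and "atomless M"
    and "L2 M X" and "L2 M Y"
    and "r = corr M X Y"
    and "r = 0
         \<or> distr M borel X = distr M borel Y
         \<or> (distr M borel X \<noteq> distr M borel Y \<and> (infinite (supp M Y) \<or> card (supp M Y) > 2))"
  shows "(IC M r X Y \<longleftrightarrow> IC_mono M r X Y)
       \<and> ((distr M borel X \<noteq> distr M borel Y \<and> (infinite (supp M Y) \<or> card (supp M Y) > 2)
            \<and> IC_mono M r X Y) \<longrightarrow> r = 0)"
proof -
  interpret prob_space M by fact
  have iii: "r = 0" if "distr M borel X \<noteq> distr M borel Y" "infinite (supp M Y) \<or> card (supp M Y) > 2"
    "IC_mono M r X Y"
    by (rule iii_main[OF that(3) assms(3) assms(4) that(2) that(1)])
  have fw: "IC_mono M r X Y" if "IC M r X Y"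
    using that unfolding IC_def IC_mono_def by simp
  have bw: "IC M r X Y" if icm: "IC_mono M r X Y"
  proof -
    have "r = 0 \<or> distr M borel X = distr M borel Y"
      using assms(6) iii icm by blast
    then show ?thesis by (rule IC_from_mono[OF icm assms(3) assms(4)])
  qed
  show ?thesis using fw bw iii by blast
qed


end
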